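(* Let $G(q)$ be a finite Chevalley group over $\mathbb{F}_q$ and let $P\subset G(q)$ be a proper parabolic subgroup. Then for any nonempty set $A\subseteq G(q)$ one has either $$|AP|\,|A\cap P| \ge 2^{-1}|A|^2 \quad\text{or}\quad |AP|\,|PA|\ge 2^{-2}|A||P|q.$$ In particular, $$\max\{|AP|,|PA|\}\ge 2^{-1}\min\{|A|^2|A\cap P|^{-1},\,(|A||P|q)^{1/2}\}$$ (with $|A|^2|A\cap P|^{-1}=+\infty$ when $A\cap P=\emptyset$). Similarly, $$|APA|\ge \frac{|P|}{4}\cdot\min\{q,\; |A|^4\sigma_P(A^{-1},A)^{-1}\sigma_P(A,A^{-1})^{-1}\}.$$ Moreover, if $B\subseteq P$ is a Borel subgroup with $P=BW_JB$ and $A\not\subseteq P$, then $|PAB|\ge q|P|$.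
   Context: $G(q)$ is a (possibly twisted) finite Chevalley group over the finite field $\mathbb{F}_q$ with its BN-pair structure (Borel subgroup $B$, Weyl group $W$); a parabolic subgroup is a subgroup containing a Borel subgroup, equivalently a conjugate of some $P_J=BW_JB$ where $W_J$ is the subgroup of $W$ generated by a subset $J$ of the fundamental reflections. For sets $X,Y$ in a group, $XY=\{xy\}$, $X^{-1}=\{x^{-1}\}$, $r_{XY}(z)$ is the number of pairs $(x,y)\in X\times Y$ with $xy=z$, and for a set $S$, $\sigma_S(X,Y)=\sum_{z\in S} r_{XY}(z)$. *)

theory Defs
  imports "HOL-Algebra.Algebra" "HOL-Computational_Algebra.Primes"
begin

definition rep_count :: "('a, 'b) monoid_scheme \<Rightarrow> 'a set \<Rightarrow> 'a set \<Rightarrow> 'a \<Rightarrow> nat" where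
  "rep_count G U V z = card {(x, y). x \<in> U \<and> y \<in> V \<and> x \<otimes>\<^bsub>G\<^esub> y = z}"

definition sigma_count :: "('a, 'b) monoid_scheme \<Rightarrow> 'a set \<Rightarrow> 'a set \<Rightarrow> 'a set \<Rightarrow> nat" where
  "sigma_count G S U V = (\<Sum>z\<in>S. rep_count G U V z)"

definition conj_set :: "('a, 'b) monoid_scheme \<Rightarrow> 'a \<Rightarrow> 'a set \<Rightarrow> 'a set" where
  "conj_set G g H = (g <#\<^bsub>G\<^esub> H) #>\<^bsub>G\<^esub> inv\<^bsub>G\<^esub> g"

text \<open>Tits system (BN-pair) (G,B,N,S): S is a set of representatives in N of the
  fundamental reflections generating W = N/(B \<inter> N).\<close>
definition tits_system :: "('a, 'b) monoid_scheme \<Rightarrow> 'a set \<Rightarrow> 'a set \<Rightarrow> 'a set \<Rightarrow> bool" where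
  "tits_system G B N S \<longleftrightarrow>
     group G \<and> subgroup B G \<and> subgroup N G \<and>
     generate G (B \<union> N) = carrier G \<and>
     (B \<inter> N) \<lhd> (G\<lparr>carrier := N\<rparr>) \<and>
     S \<subseteq> N \<and>
     (\<forall>s\<in>S. s \<notin> B \<inter> N \<and> s \<otimes>\<^bsub>G\<^esub> s \<in> B \<inter> N) \<and>
     generate (G\<lparr>carrier := N\<rparr> Mod (B \<inter> N)) ((\<lambda>s. (B \<inter> N) #>\<^bsub>G\<^esub> s) ` S)
        = carrier (G\<lparr>carrier := N\<rparr> Mod (B \<inter> N)) \<and>
     (\<forall>s\<in>S. \<forall>n\<in>N. ({s} <#>\<^bsub>G\<^esub> B) <#>\<^bsub>G\<^esub> {n} \<subseteq>
         ((B <#>\<^bsub>G\<^esub> {n}) <#>\<^bsub>G\<^esub> B) \<union> ((B <#>\<^bsub>G\<^esub> {s \<otimes>\<^bsub>G\<^esub> n}) <#>\<^bsub>G\<^esub> B)) \<and>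
     (\<forall>s\<in>S. conj_set G s B \<noteq> B)"

definition borel_subgroup :: "('a, 'b) monoid_scheme \<Rightarrow> 'a set \<Rightarrow> 'a set \<Rightarrow> bool" where
  "borel_subgroup G B Bo \<longleftrightarrow> (\<exists>g\<in>carrier G. Bo = conj_set G g B)"

definition parabolic_subgroup :: "('a, 'b) monoid_scheme \<Rightarrow> 'a set \<Rightarrow> 'a set \<Rightarrow> bool" where
  "parabolic_subgroup G B P \<longleftrightarrow> subgroup P G \<and> (\<exists>Bo. borel_subgroup G B Bo \<and> Bo \<subseteq> P)"

text \<open>Finite group with a BN-pair whose parameters over F_q satisfy
  |B s B| \<ge> q |B| for every fundamental reflection s (true for all finite
  (twisted) Chevalley groups G(q)).\<close>
definition finite_BN_group_over :: "('a, 'b) monoid_scheme \<Rightarrow> 'a set \<Rightarrow> 'a set \<Rightarrow> 'a set \<Rightarrow> nat \<Rightarrow> bool" where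
  "finite_BN_group_over G B N S q \<longleftrightarrow>
     tits_system G B N S \<and> finite (carrier G) \<and>
     (\<exists>p k. Factorial_Ring.prime (p::nat) \<and> k > 0 \<and> q = p ^ k) \<and>
     (\<forall>s\<in>S. card ((B <#>\<^bsub>G\<^esub> {s}) <#>\<^bsub>G\<^esub> B) \<ge> q * card B)"

end

theory Submission
  imports Defs
begin

lemma cs_sum:
  fixes x :: "'u \<Rightarrow> real"
  assumes "finite U"
  shows "(\<Sum>u\<in>U. x u)^2 \<le> real (card U) * (\<Sum>u\<in>U. (x u)^2)"
proof -
  have "0 \<le> (\<Sum>u\<in>U. \<Sum>v\<in>U. (x u - x v)^2)" by (intro sum_nonneg) auto
  also have "\<dots> = (\<Sum>u\<in>U. \<Sum>v\<in>U. (x u)^2 + (x v)^2 - 2 * (x u * x v))"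
    by (intro sum.cong refl) (simp add: power2_diff)
  also have "\<dots> = (\<Sum>u\<in>U. real (card U) * (x u)^2 + (\<Sum>v\<in>U. (x v)^2) - 2 * x u * (\<Sum>v\<in>U. x v))"
    by (intro sum.cong refl) (simp add: sum_subtractf sum.distrib sum_distrib_left mult.assoc)
  also have "\<dots> = 2 * real (card U) * (\<Sum>u\<in>U. (x u)^2) - 2 * (\<Sum>u\<in>U. x u)^2"
    by (simp add: sum_subtractf sum.distrib sum_distrib_left[symmetric] sum_distrib_right[symmetric] power2_eq_square)
  finally show ?thesis by simp
qed

lemma fiber_upper:
  fixes c :: real
  assumes "finite U" "\<And>t. t \<in> T \<Longrightarrow> f t \<in> U"
    and "\<And>u. u \<in> U \<Longrightarrow> real (card {t\<in>T. f t = u}) \<le> c"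
  shows "real (card T) \<le> real (card U) * c"
proof -
  have "T = (\<Union>u\<in>U. {t\<in>T. f t = u})" using assms(2) by auto
  hence "card T \<le> (\<Sum>u\<in>U. card {t\<in>T. f t = u})"
    using card_UN_le[OF assms(1), of "\<lambda>u. {t\<in>T. f t = u}"] by simp
  hence "real (card T) \<le> (\<Sum>u\<in>U. real (card {t\<in>T. f t = u}))"
    by (metis of_nat_le_iff of_nat_sum)
  also have "\<dots> \<le> (\<Sum>u\<in>U. c)" by (intro sum_mono assms(3))
  finally show ?thesis by simp
qed

lemma fiber_lower:
  assumes "finite T" "\<And>u. u \<in> U \<Longrightarrow> c \<le> card {t\<in>T. f t = u}"
  shows "card U * c \<le> card T"
proof -
  have fU: "finite (U \<inter> f ` T)" using assms(1) by auto
  show ?thesis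
  proof (cases "c = 0")
    case True thus ?thesis by simp
  next
    case False
    have "U \<subseteq> f ` T"
    proof
      fix u assume "u \<in> U"
      hence "c \<le> card {t\<in>T. f t = u}" by (rule assms(2))
      with False have "{t\<in>T. f t = u} \<noteq> {}" by (metis card.empty le_zero_eq)
      thus "u \<in> f ` T" by auto
    qed
    hence fin: "finite U" using assms(1) finite_subset by blast
    have "card U * c = (\<Sum>u\<in>U. c)" by simp
    also have "\<dots> \<le> (\<Sum>u\<in>U. card {t\<in>T. f t = u})" by (intro sum_mono assms(2))
    also have "\<dots> = card (\<Union>u\<in>U. {t\<in>T. f t = u})"
      by (rule card_UN_disjoint[symmetric]) (use fin assms(1) in auto)
    also have "\<dots> \<le> card T" by (rule card_mono[OF assms(1)]) auto
    finally show ?thesis .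
  qed
qed

lemma gcs:
  assumes "finite T"
  shows "real (card T)^2 \<le> real (card (f ` T)) * real (card {(t,t'). t \<in> T \<and> t' \<in> T \<and> f t = f t'})"
proof -
  let ?F = "\<lambda>u. {t\<in>T. f t = u}"
  have fin: "finite (f ` T)" using assms by auto
  have "T = (\<Union>u\<in>f ` T. ?F u)" by auto
  hence c1: "card T = (\<Sum>u\<in>f ` T. card (?F u))"
    apply (rule ssubst[where P="\<lambda>Z. card Z = _"])
    apply (rule card_UN_disjoint)
    using fin assms by auto
  have "{(t,t'). t \<in> T \<and> t' \<in> T \<and> f t = f t'} = (\<Union>u\<in>f ` T. ?F u \<times> ?F u)" by auto
  hence c2: "card {(t,t'). t \<in> T \<and> t' \<in> T \<and> f t = f t'} = (\<Sum>u\<in>f ` T. card (?F u \<times> ?F u))"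
    apply (rule ssubst[where P="\<lambda>Z. card Z = _"])
    apply (rule card_UN_disjoint)
    using fin assms by auto
  have "real (card T)^2 = (\<Sum>u\<in>f ` T. real (card (?F u)))^2" using c1 by (simp add: of_nat_sum)
  also have "\<dots> \<le> real (card (f ` T)) * (\<Sum>u\<in>f ` T. (real (card (?F u)))^2)"
    by (rule cs_sum[OF fin])
  also have "(\<Sum>u\<in>f ` T. (real (card (?F u)))^2) = real (card {(t,t'). t \<in> T \<and> t' \<in> T \<and> f t = f t'})"
    using c2 by (simp add: of_nat_sum card_cartesian_product power2_eq_square)
  finally show ?thesis .
qed


locale bn = group G for G (structure) +
  fixes B N S
  assumes B_sub: "subgroup B G" and N_sub: "subgroup N G"
  and gen: "generate G (B \<union> N) = carrier G"
  and Hnorm: "(B \<inter> N) \<lhd> G\<lparr>carrier := N\<rparr>"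
  and SN: "S \<subseteq> N" and Ssq: "\<forall>s\<in>S. s \<otimes> s \<in> B \<inter> N"
  and Wgen: "generate (G\<lparr>carrier := N\<rparr> Mod (B \<inter> N)) ((\<lambda>s. (B \<inter> N) #> s) ` S)
        = carrier (G\<lparr>carrier := N\<rparr> Mod (B \<inter> N))"
  and T1: "\<forall>s\<in>S. \<forall>n\<in>N. ({s} <#> B) <#> {n} \<subseteq> ((B <#> {n}) <#> B) \<union> ((B <#> {s \<otimes> n}) <#> B)"
begin

abbreviation "H \<equiv> B \<inter> N"

lemma Bc[simp]: "b \<in> B \<Longrightarrow> b \<in> carrier G" using subgroup.mem_carrier[OF B_sub] .
lemma Nc[simp]: "n \<in> N \<Longrightarrow> n \<in> carrier G" using subgroup.mem_carrier[OF N_sub] .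
lemma SNe[simp]: "s \<in> S \<Longrightarrow> s \<in> N" using SN by auto
lemma Bm[simp,intro]: "a \<in> B \<Longrightarrow> b \<in> B \<Longrightarrow> a \<otimes> b \<in> B" using subgroup.m_closed[OF B_sub] .
lemma Bi[simp,intro]: "a \<in> B \<Longrightarrow> inv a \<in> B" using subgroup.m_inv_closed[OF B_sub] .
lemma B1[simp,intro]: "\<one> \<in> B" using subgroup.one_closed[OF B_sub] .
lemma Nm[simp,intro]: "a \<in> N \<Longrightarrow> b \<in> N \<Longrightarrow> a \<otimes> b \<in> N" using subgroup.m_closed[OF N_sub] .
lemma Ni[simp,intro]: "a \<in> N \<Longrightarrow> inv a \<in> N" using subgroup.m_inv_closed[OF N_sub] .
lemma N1[simp,intro]: "\<one> \<in> N" using subgroup.one_closed[OF N_sub] .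

lemma hnorm: "n \<in> N \<Longrightarrow> h \<in> H \<Longrightarrow> n \<otimes> h \<otimes> inv n \<in> H"
proof -
  assume n: "n \<in> N" and h: "h \<in> H"
  interpret nn: normal H "G\<lparr>carrier := N\<rparr>" by (rule Hnorm)
  have "n \<otimes>\<^bsub>G\<lparr>carrier := N\<rparr>\<^esub> h \<otimes>\<^bsub>G\<lparr>carrier := N\<rparr>\<^esub> inv\<^bsub>G\<lparr>carrier := N\<rparr>\<^esub> n \<in> H"
    using nn.inv_op_closed2[of n h] n h by simp
  thus ?thesis using m_inv_consistent[OF N_sub n] by simp
qed

lemma hnorm': "n \<in> N \<Longrightarrow> h \<in> H \<Longrightarrow> inv n \<otimes> h \<otimes> n \<in> H"
  using hnorm[of "inv n" h] by (simp add: inv_inv)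

lemma sqH: "s \<in> S \<Longrightarrow> s \<otimes> s \<in> H" using Ssq by auto
lemma isqH: "s \<in> S \<Longrightarrow> inv (s \<otimes> s) \<in> H" using sqH[of s] by auto

lemma inv_s1: "s \<in> S \<Longrightarrow> inv s = s \<otimes> inv (s \<otimes> s)"
  by (simp add: inv_mult_group m_assoc[symmetric])
lemma inv_s2: "s \<in> S \<Longrightarrow> inv s = inv (s \<otimes> s) \<otimes> s"
  by (simp add: inv_mult_group m_assoc)

definition DC :: "'a \<Rightarrow> 'a \<Rightarrow> bool" where
  "DC n x \<longleftrightarrow> (\<exists>b1\<in>B. \<exists>b2\<in>B. x = b1 \<otimes> n \<otimes> b2)"

lemma DC_refl: "n \<in> carrier G \<Longrightarrow> DC n n"
  unfolding DC_def by (rule bexI[of _ \<one>], rule bexI[of _ \<one>]) auto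

lemma DC_lmult: "DC n x \<Longrightarrow> b \<in> B \<Longrightarrow> n \<in> carrier G \<Longrightarrow> DC n (b \<otimes> x)"
  unfolding DC_def by (auto simp: m_assoc) (metis Bc Bm m_assoc m_closed)

lemma DC_rmult: "DC n x \<Longrightarrow> b \<in> B \<Longrightarrow> n \<in> carrier G \<Longrightarrow> DC n (x \<otimes> b)"
  unfolding DC_def by (auto simp: m_assoc) (metis Bc Bm m_assoc m_closed)

lemma DC_sym: "DC n x \<Longrightarrow> n \<in> carrier G \<Longrightarrow> DC x n"
proof -
  assume "DC n x" "n \<in> carrier G"
  then obtain b1 b2 where b: "b1 \<in> B" "b2 \<in> B" "x = b1 \<otimes> n \<otimes> b2" unfolding DC_def by auto
  have "n = inv b1 \<otimes> x \<otimes> inv b2" using b \<open>n \<in> carrier G\<close>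
    by (simp add: m_assoc[symmetric] ) (simp add: m_assoc)
  thus ?thesis unfolding DC_def using b by blast
qed

lemma DC_inv: "DC n x \<Longrightarrow> n \<in> carrier G \<Longrightarrow> DC (inv n) (inv x)"
proof -
  assume "DC n x" "n \<in> carrier G"
  then obtain b1 b2 where b: "b1 \<in> B" "b2 \<in> B" "x = b1 \<otimes> n \<otimes> b2" unfolding DC_def by auto
  have "inv x = inv b2 \<otimes> inv n \<otimes> inv b1" using b \<open>n \<in> carrier G\<close>
    by (simp add: inv_mult_group m_assoc)
  thus ?thesis unfolding DC_def using b by blast
qed

lemma DC_carrier: "DC n x \<Longrightarrow> n \<in> carrier G \<Longrightarrow> x \<in> carrier G"
  unfolding DC_def by auto

lemma DC_Hr: "DC n x \<Longrightarrow> n \<in> carrier G \<Longrightarrow> h \<in> B \<Longrightarrow> DC (n \<otimes> h) x"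
proof -
  assume "DC n x" "n \<in> carrier G" "h \<in> B"
  then obtain b1 b2 where b: "b1 \<in> B" "b2 \<in> B" "x = b1 \<otimes> n \<otimes> b2" unfolding DC_def by auto
  have "x = b1 \<otimes> (n \<otimes> h) \<otimes> (inv h \<otimes> b2)" using b \<open>n \<in> carrier G\<close> \<open>h \<in> B\<close>
    by (simp add: m_assoc[symmetric]) (simp add: m_assoc)
  thus ?thesis unfolding DC_def using b \<open>h \<in> B\<close> by blast
qed

lemma DC_B: "DC h x \<Longrightarrow> h \<in> B \<Longrightarrow> x \<in> B"
  unfolding DC_def by auto

lemma T1e: "s \<in> S \<Longrightarrow> n \<in> N \<Longrightarrow> b \<in> B \<Longrightarrow> DC n (s \<otimes> b \<otimes> n) \<or> DC (s \<otimes> n) (s \<otimes> b \<otimes> n)"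
proof -
  assume s: "s \<in> S" and n: "n \<in> N" and b: "b \<in> B"
  have "s \<otimes> b \<otimes> n \<in> ({s} <#> B) <#> {n}" unfolding set_mult_def using b by blast
  hence "s \<otimes> b \<otimes> n \<in> ((B <#> {n}) <#> B) \<union> ((B <#> {s \<otimes> n}) <#> B)" using T1 s n by blast
  thus ?thesis unfolding set_mult_def DC_def by blast
qed

lemma T1inv: "s \<in> S \<Longrightarrow> n \<in> N \<Longrightarrow> b \<in> B \<Longrightarrow> DC n (inv s \<otimes> b \<otimes> n) \<or> DC (s \<otimes> n) (inv s \<otimes> b \<otimes> n)"
proof -
  assume s: "s \<in> S" and n: "n \<in> N" and b: "b \<in> B"
  have e: "inv s \<otimes> b \<otimes> n = s \<otimes> (inv (s \<otimes> s) \<otimes> b) \<otimes> n"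
    using s b n by (simp add: inv_s1[OF s] m_assoc)
  show ?thesis unfolding e using T1e[OF s n, of "inv (s \<otimes> s) \<otimes> b"] isqH[OF s] b by auto
qed

lemma T1r: "t \<in> S \<Longrightarrow> n \<in> N \<Longrightarrow> b \<in> B \<Longrightarrow> DC n (n \<otimes> b \<otimes> t) \<or> DC (n \<otimes> t) (n \<otimes> b \<otimes> t)"
proof -
  assume t: "t \<in> S" and n: "n \<in> N" and b: "b \<in> B"
  have e: "inv (n \<otimes> b \<otimes> t) = inv t \<otimes> inv b \<otimes> inv n" using t n b by (simp add: inv_mult_group m_assoc)
  have c: "DC (inv n) (inv (n \<otimes> b \<otimes> t)) \<or> DC (t \<otimes> inv n) (inv (n \<otimes> b \<otimes> t))"
    unfolding e by (rule T1inv) (use t n b in auto)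
  thus ?thesis
  proof
    assume "DC (inv n) (inv (n \<otimes> b \<otimes> t))"
    from DC_inv[OF this] show ?thesis using t n b by (simp add: inv_inv)
  next
    assume "DC (t \<otimes> inv n) (inv (n \<otimes> b \<otimes> t))"
    from DC_inv[OF this] have "DC (n \<otimes> inv t) (n \<otimes> b \<otimes> t)" using t n b by (simp add: inv_inv inv_mult_group)
    from DC_Hr[OF this _ , of "t \<otimes> t"] have "DC (n \<otimes> inv t \<otimes> (t \<otimes> t)) (n \<otimes> b \<otimes> t)" using t n sqH[OF t] by auto
    moreover have "n \<otimes> inv t \<otimes> (t \<otimes> t) = n \<otimes> t" using t n by (simp add: m_assoc[symmetric]) (simp add: m_assoc)
    ultimately show ?thesis by simp
  qed
qed

end

context bn begin

primrec Wk :: "nat \<Rightarrow> 'a set" where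
  "Wk 0 = H"
| "Wk (Suc k) = {s \<otimes> w | s w. s \<in> S \<and> w \<in> Wk k}"

lemma W_N: "w \<in> Wk k \<Longrightarrow> w \<in> N"
  by (induction k arbitrary: w) auto

lemma W_c[simp]: "w \<in> Wk k \<Longrightarrow> w \<in> carrier G"
  using W_N Nc by blast

lemma W_rH: "w \<in> Wk k \<Longrightarrow> h \<in> H \<Longrightarrow> w \<otimes> h \<in> Wk k"
proof (induction k arbitrary: w)
  case 0 thus ?case by auto
next
  case (Suc k)
  then obtain s w' where sw: "s \<in> S" "w' \<in> Wk k" "w = s \<otimes> w'" by auto
  have "w \<otimes> h = s \<otimes> (w' \<otimes> h)" using sw Suc.prems by (simp add: m_assoc)
  thus ?case using Suc.IH[OF sw(2) Suc.prems(2)] sw(1) by auto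
qed

lemma W_lH: "h \<in> H \<Longrightarrow> w \<in> Wk k \<Longrightarrow> h \<otimes> w \<in> Wk k"
proof (induction k arbitrary: w h)
  case 0 thus ?case by auto
next
  case (Suc k)
  then obtain s w' where sw: "s \<in> S" "w' \<in> Wk k" "w = s \<otimes> w'" by auto
  have hh: "inv s \<otimes> h \<otimes> s \<in> H" using hnorm'[of s h] sw Suc.prems by auto
  have "h \<otimes> w = s \<otimes> ((inv s \<otimes> h \<otimes> s) \<otimes> w')" using sw Suc.prems
    by (simp add: m_assoc[symmetric])
  thus ?case using Suc.IH[OF hh sw(2)] sw(1) by auto
qed

lemma W_rS: "w \<in> Wk k \<Longrightarrow> t \<in> S \<Longrightarrow> w \<otimes> t \<in> Wk (Suc k)"
proof (induction k arbitrary: w)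
  case 0
  have hh: "inv t \<otimes> w \<otimes> t \<in> H" using hnorm'[of t w] 0 by auto
  have "w \<otimes> t = t \<otimes> (inv t \<otimes> w \<otimes> t)" using 0
    by (simp add: m_assoc[symmetric])
  hence "w \<otimes> t \<in> {s \<otimes> w | s w. s \<in> S \<and> w \<in> H}" using hh 0 by blast
  thus ?case by simp
next
  case (Suc k)
  then obtain s w' where sw: "s \<in> S" "w' \<in> Wk k" "w = s \<otimes> w'" by auto
  have "w \<otimes> t = s \<otimes> (w' \<otimes> t)" using sw Suc.prems by (simp add: m_assoc)
  thus ?case using Suc.IH[OF sw(2) Suc.prems(2)] sw(1) by auto
qed

lemma W_dec_r: "w \<in> Wk (Suc k) \<Longrightarrow> \<exists>w'\<in>Wk k. \<exists>t\<in>S. w = w' \<otimes> t"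
proof (induction k arbitrary: w)
  case 0
  then obtain s h where sw: "s \<in> S" "h \<in> H" "w = s \<otimes> h" by auto
  have hh: "s \<otimes> h \<otimes> inv s \<in> H" using hnorm[of s h] sw by auto
  have "w = (s \<otimes> h \<otimes> inv s) \<otimes> s" using sw by (simp add: m_assoc)
  thus ?case using hh sw by auto
next
  case (Suc k)
  then obtain s w1 where sw: "s \<in> S" "w1 \<in> Wk (Suc k)" "w = s \<otimes> w1" by auto
  from Suc.IH[OF sw(2)] obtain w' t where wt: "w' \<in> Wk k" "t \<in> S" "w1 = w' \<otimes> t" by auto
  have "w = (s \<otimes> w') \<otimes> t" using sw wt by (simp add: m_assoc)
  moreover have "s \<otimes> w' \<in> Wk (Suc k)" using sw wt by auto
  ultimately show ?case using wt by blast
qed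

lemma W_mult: "w \<in> Wk k \<Longrightarrow> v \<in> Wk j \<Longrightarrow> w \<otimes> v \<in> Wk (k + j)"
proof (induction k arbitrary: w)
  case 0 thus ?case using W_lH by auto
next
  case (Suc k)
  then obtain s w' where sw: "s \<in> S" "w' \<in> Wk k" "w = s \<otimes> w'" by auto
  have "w \<otimes> v = s \<otimes> (w' \<otimes> v)" using sw Suc.prems by (simp add: m_assoc)
  thus ?case using Suc.IH[OF sw(2) Suc.prems(2)] sw(1) by auto
qed

lemma W_one: "\<one> \<in> Wk 0" by auto

lemma W_S: "s \<in> S \<Longrightarrow> s \<in> Wk 1"
  using W_rS[OF W_one, of s] by simp

lemma W_invS: "s \<in> S \<Longrightarrow> inv s \<in> Wk 1"
proof -
  assume s: "s \<in> S"
  have "inv (s \<otimes> s) \<in> Wk 0" using isqH[OF s] by simp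
  from W_rS[OF this s] show ?thesis using inv_s2[OF s] by simp
qed

lemma W_invSl: "s \<in> S \<Longrightarrow> w \<in> Wk k \<Longrightarrow> inv s \<otimes> w \<in> Wk (Suc k)"
  using W_mult[OF W_invS] by simp

lemma W_invSr: "w \<in> Wk k \<Longrightarrow> t \<in> S \<Longrightarrow> w \<otimes> inv t \<in> Wk (Suc k)"
  using W_mult[OF _ W_invS] by simp

lemma rc_eq: "r_coset (G\<lparr>carrier := N\<rparr>) = r_coset G"
  by (intro ext) (simp add: r_coset_def)

lemma sm_eq: "set_mult (G\<lparr>carrier := N\<rparr>) = set_mult G"
  by (intro ext) (simp add: set_mult_def)

lemma W_all: "n \<in> N \<Longrightarrow> \<exists>k. n \<in> Wk k"
proof -
  assume n: "n \<in> N"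
  let ?G = "G\<lparr>carrier := N\<rparr>"
  interpret nn: normal H ?G by (rule Hnorm)
  have gen_claim: "Z \<in> generate (?G Mod H) ((\<lambda>s. H #> s) ` S) \<Longrightarrow> \<exists>k. \<exists>w\<in>Wk k. Z = H #> w" for Z
  proof (induction rule: generate.induct)
    case one
    have "H #> \<one> = H" by (rule coset_mult_one) auto
    thus ?case using W_one by (metis one_FactGroup)
  next
    case (incl h)
    thus ?case using W_S by blast
  next
    case (inv h)
    then obtain s where s: "s \<in> S" "h = H #> s" by auto
    have hc: "h \<in> carrier (?G Mod H)" using s unfolding FactGroup_def RCOSETS_def rc_eq by auto
    have "inv\<^bsub>?G Mod H\<^esub> h = set_inv\<^bsub>?G\<^esub> h" by (rule nn.inv_FactGroup[OF hc])
    also have "\<dots> = H #>\<^bsub>?G\<^esub> inv\<^bsub>?G\<^esub> s" unfolding s(2) rc_eq[symmetric]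
      by (rule nn.rcos_inv) (use s in auto)
    also have "\<dots> = H #> inv s" using s by (simp add: rc_eq m_inv_consistent[OF N_sub])
    finally show ?case using W_invS[OF s(1)] by blast
  next
    case (eng h1 h2)
    then obtain k1 w1 k2 w2 where w: "w1 \<in> Wk k1" "h1 = H #> w1" "w2 \<in> Wk k2" "h2 = H #> w2" by blast
    have "h1 \<otimes>\<^bsub>?G Mod H\<^esub> h2 = (H #>\<^bsub>?G\<^esub> w1) <#>\<^bsub>?G\<^esub> (H #>\<^bsub>?G\<^esub> w2)"
      by (simp add: w rc_eq)
    also have "\<dots> = H #>\<^bsub>?G\<^esub> (w1 \<otimes>\<^bsub>?G\<^esub> w2)" by (rule nn.rcos_sum) (use w W_N in auto)
    also have "\<dots> = H #> (w1 \<otimes> w2)" by (simp add: rc_eq)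
    finally show ?case using W_mult[OF w(1) w(3)] by blast
  qed
  have "H #> n \<in> carrier (?G Mod H)" using n unfolding FactGroup_def RCOSETS_def rc_eq by auto
  hence "H #> n \<in> generate (?G Mod H) ((\<lambda>s. H #> s) ` S)" using Wgen by simp
  then obtain k w where w: "w \<in> Wk k" "H #> n = H #> w" using gen_claim by blast
  have "n \<in> H #> n" using n by (intro rcos_self) (auto intro: subgroups_Inter_pair B_sub N_sub)
  hence "n \<in> H #> w" using w by simp
  then obtain h where h: "h \<in> H" "n = h \<otimes> w" unfolding r_coset_def by auto
  thus ?thesis using W_lH[OF h(1) w(1)] by auto
qed

end

context bn begin

lemma ic1[simp]: "x \<in> carrier G \<Longrightarrow> y \<in> carrier G \<Longrightarrow> inv x \<otimes> (x \<otimes> y) = y"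
  by (simp add: m_assoc[symmetric])
lemma ic2[simp]: "x \<in> carrier G \<Longrightarrow> y \<in> carrier G \<Longrightarrow> x \<otimes> (inv x \<otimes> y) = y"
  by (simp add: m_assoc[symmetric])

definition len :: "'a \<Rightarrow> nat" where "len n = (LEAST k. n \<in> Wk k)"

lemma len_W: "n \<in> N \<Longrightarrow> n \<in> Wk (len n)"
  unfolding len_def using W_all by (metis LeastI_ex)

lemma len_le: "n \<in> Wk k \<Longrightarrow> len n \<le> k"
  unfolding len_def by (rule Least_le)

lemma len_sl: "s \<in> S \<Longrightarrow> n \<in> N \<Longrightarrow> len (s \<otimes> n) \<le> Suc (len n)"
  using len_W[of n] by (intro len_le) auto

lemma len_sl': "s \<in> S \<Longrightarrow> n \<in> N \<Longrightarrow> len n \<le> Suc (len (s \<otimes> n))"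
proof -
  assume s: "s \<in> S" and n: "n \<in> N"
  have "inv s \<otimes> (s \<otimes> n) \<in> Wk (Suc (len (s \<otimes> n)))" by (rule W_invSl[OF s len_W]) (use s n in auto)
  thus ?thesis using s n by (intro len_le) simp
qed

lemma len_sr: "t \<in> S \<Longrightarrow> n \<in> N \<Longrightarrow> len (n \<otimes> t) \<le> Suc (len n)"
  using len_W[of n] by (intro len_le W_rS) auto

lemma len_sr': "t \<in> S \<Longrightarrow> n \<in> N \<Longrightarrow> len n \<le> Suc (len (n \<otimes> t))"
proof -
  assume s: "t \<in> S" and n: "n \<in> N"
  have "(n \<otimes> t) \<otimes> inv t \<in> Wk (Suc (len (n \<otimes> t)))" by (rule W_invSr[OF len_W s]) (use s n in auto)
  thus ?thesis using s n by (intro len_le) (simp add: m_assoc)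
qed

lemma len_Hr: "h \<in> H \<Longrightarrow> n \<in> N \<Longrightarrow> len (n \<otimes> h) = len n"
proof -
  assume h: "h \<in> H" and n: "n \<in> N"
  have "len (n \<otimes> h) \<le> len n" by (intro len_le W_rH len_W n h)
  moreover have "(n \<otimes> h) \<otimes> inv h \<in> Wk (len (n \<otimes> h))" by (intro W_rH len_W) (use n h in auto)
  hence "len n \<le> len (n \<otimes> h)" using n h by (intro len_le) (simp add: m_assoc)
  ultimately show ?thesis by simp
qed

lemma len0: "n \<in> N \<Longrightarrow> len n = 0 \<Longrightarrow> n \<in> H"
  using len_W[of n] by simp

lemma len_decl: "n \<in> N \<Longrightarrow> len n = Suc k \<Longrightarrow> \<exists>s\<in>S. \<exists>m\<in>N. n = s \<otimes> m \<and> len m = k"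
proof -
  assume n: "n \<in> N" and l: "len n = Suc k"
  from len_W[OF n] l obtain s m where sm: "s \<in> S" "m \<in> Wk k" "n = s \<otimes> m" by auto
  have "len m \<le> k" using sm by (intro len_le)
  moreover have "len n \<le> Suc (len m)" using sm len_sl[of s m] W_N by auto
  ultimately show ?thesis using sm l W_N by auto
qed

lemma len_decr: "n \<in> N \<Longrightarrow> len n = Suc k \<Longrightarrow> \<exists>t\<in>S. \<exists>m\<in>N. n = m \<otimes> t \<and> len m = k"
proof -
  assume n: "n \<in> N" and l: "len n = Suc k"
  from len_W[OF n] l W_dec_r obtain t m where sm: "t \<in> S" "m \<in> Wk k" "n = m \<otimes> t" by metis
  have "len m \<le> k" using sm by (intro len_le)
  moreover have "len n \<le> Suc (len m)" using sm len_sr[of t m] W_N by auto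
  ultimately show ?thesis using sm l W_N by auto
qed

lemma bruhat_step: "n \<in> Wk k \<Longrightarrow> m \<in> N \<Longrightarrow> DC m y \<Longrightarrow> \<exists>m'\<in>N. DC m' (n \<otimes> y)"
proof (induction k arbitrary: n)
  case 0 thus ?case using DC_lmult[of m y n] Nc[of m] by auto
next
  case (Suc k)
  then obtain s w where sw: "s \<in> S" "w \<in> Wk k" "n = s \<otimes> w" by auto
  from Suc.IH[OF sw(2) Suc.prems(2,3)] obtain m' where m': "m' \<in> N" "DC m' (w \<otimes> y)" by auto
  then obtain c1 c2 where c: "c1 \<in> B" "c2 \<in> B" "w \<otimes> y = c1 \<otimes> m' \<otimes> c2" unfolding DC_def by auto
  have yc: "y \<in> carrier G" using DC_carrier Suc.prems by auto
  have e: "n \<otimes> y = (s \<otimes> c1 \<otimes> m') \<otimes> c2" using sw c yc m' by (simp add: m_assoc)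
  from T1e[OF sw(1) m'(1) c(1)] show ?case unfolding e
    using DC_rmult c(2) m'(1) sw(1) by (meson Nm SNe Nc)
qed

lemma bruhat: "x \<in> carrier G \<Longrightarrow> \<exists>n\<in>N. DC n x"
proof -
  assume x: "x \<in> carrier G"
  have "z \<in> generate G (B \<union> N) \<Longrightarrow> (\<And>y. (\<exists>m\<in>N. DC m y) \<Longrightarrow> (\<exists>m\<in>N. DC m (z \<otimes> y)))" for z
  proof (induction rule: generate.induct)
    case one
    then obtain m where "m \<in> N" "DC m y" by auto
    thus ?case using DC_carrier by auto
  next
    case (incl h)
    then obtain m where m: "m \<in> N" "DC m y" by auto
    show ?case
    proof (cases "h \<in> B")
      case True thus ?thesis using m DC_lmult[of m y h] Nc[of m] by auto
    next
      case False
      hence "h \<in> N" using incl by auto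
      from len_W[OF this] bruhat_step m show ?thesis by blast
    qed
  next
    case (inv h)
    then obtain m where m: "m \<in> N" "DC m y" by auto
    show ?case
    proof (cases "h \<in> B")
      case True thus ?thesis using m DC_lmult[of m y "inv h"] Nc[of m] by auto
    next
      case False
      hence "inv h \<in> N" using inv by auto
      from len_W[OF this] bruhat_step m show ?thesis by blast
    qed
  next
    case (eng h1 h2)
    have c1: "h1 \<in> carrier G" "h2 \<in> carrier G" using eng.hyps gen by auto
    from eng.prems obtain m where m: "m \<in> N" "DC m y" by auto
    have yc: "y \<in> carrier G" using DC_carrier m by auto
    from eng.IH(2)[OF eng.prems] have "\<exists>m\<in>N. DC m (h2 \<otimes> y)" .
    from eng.IH(1)[OF this] show ?case using c1 yc by (simp add: m_assoc)
  qed
  from this[of x \<one>] x gen DC_refl[of \<one>] show ?thesis by auto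
qed

lemma lemU: "n1 \<in> N \<Longrightarrow> n2 \<in> N \<Longrightarrow> DC n2 n1 \<Longrightarrow> len n1 = k \<Longrightarrow> k \<le> len n2 \<Longrightarrow> inv n2 \<otimes> n1 \<in> B"
proof (induction k arbitrary: n1 n2)
  case 0
  hence "n1 \<in> B" using len0 by auto
  moreover have "DC n1 n2" using DC_sym 0 by auto
  ultimately have "n2 \<in> B" using DC_B by auto
  thus ?case using \<open>n1 \<in> B\<close> by auto
next
  case (Suc k)
  from len_decl[OF Suc.prems(1,4)] obtain s m where sm: "s \<in> S" "m \<in> N" "n1 = s \<otimes> m" "len m = k" by auto
  from Suc.prems(3) obtain b1 b2 where b: "b1 \<in> B" "b2 \<in> B" "n1 = b1 \<otimes> n2 \<otimes> b2" unfolding DC_def by auto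
  have me: "m = (inv s \<otimes> b1 \<otimes> n2) \<otimes> b2"
  proof -
    have "m = inv s \<otimes> n1" using sm by simp
    thus ?thesis using b sm Suc.prems by (simp add: m_assoc)
  qed
  have "DC n2 (inv s \<otimes> b1 \<otimes> n2) \<or> DC (s \<otimes> n2) (inv s \<otimes> b1 \<otimes> n2)" by (rule T1inv) (use sm b Suc.prems in auto)
  hence "DC n2 m \<or> DC (s \<otimes> n2) m" unfolding me using DC_rmult b sm Suc.prems by (meson Nc Nm SNe)
  thus ?case
  proof
    assume d: "DC n2 m"
    have "inv n2 \<otimes> m \<in> B" using Suc.IH[OF sm(2) Suc.prems(2) d sm(4)] Suc.prems by auto
    hence hH: "inv n2 \<otimes> m \<in> H" using sm Suc.prems by auto
    have "len (n2 \<otimes> (inv n2 \<otimes> m)) = len n2" by (rule len_Hr[OF hH Suc.prems(2)])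
    hence "len m = len n2" using sm Suc.prems by simp
    thus ?thesis using Suc.prems sm by simp
  next
    assume d: "DC (s \<otimes> n2) m"
    have "k \<le> len (s \<otimes> n2)" using len_sl'[OF sm(1) Suc.prems(2)] Suc.prems by simp
    hence i: "inv (s \<otimes> n2) \<otimes> m \<in> B" using Suc.IH[OF sm(2) _ d sm(4)] sm Suc.prems by auto
    let ?h = "inv (s \<otimes> s)"
    have hh: "inv n2 \<otimes> ?h \<otimes> n2 \<in> H" using hnorm'[OF Suc.prems(2) isqH[OF sm(1)]] .
    have e: "inv n2 \<otimes> n1 = inv (inv n2 \<otimes> ?h \<otimes> n2) \<otimes> (inv (s \<otimes> n2) \<otimes> m)"
      using sm Suc.prems by (simp add: m_assoc inv_mult_group)
    show ?thesis unfolding e using hh i by auto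
  qed
qed

lemma lemU': "n1 \<in> N \<Longrightarrow> n2 \<in> N \<Longrightarrow> DC n2 n1 \<Longrightarrow> len n1 = len n2"
proof -
  assume n: "n1 \<in> N" "n2 \<in> N" and d: "DC n2 n1"
  show ?thesis
  proof (cases "len n1 \<le> len n2")
    case True
    have "inv n2 \<otimes> n1 \<in> H" using lemU[OF n d refl True] n by auto
    from len_Hr[OF this n(2)] show ?thesis using n by simp
  next
    case False
    have d': "DC n1 n2" using DC_sym d n by auto
    have "inv n1 \<otimes> n2 \<in> H" using lemU[OF n(2) n(1) d' refl] False n by auto
    from len_Hr[OF this n(1)] show ?thesis using n by simp
  qed
qed

end

context bn begin

lemma lemS: "m \<in> N \<Longrightarrow> len m = k \<Longrightarrow> s \<in> S \<Longrightarrow> b \<in> B \<Longrightarrow> k < len (s \<otimes> m) \<Longrightarrow> DC (s \<otimes> m) (s \<otimes> b \<otimes> m)"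
proof (induction k arbitrary: m)
  case 0
  hence mB: "m \<in> B" using len0 by auto
  have "s \<otimes> b \<otimes> m = \<one> \<otimes> (s \<otimes> m) \<otimes> (inv m \<otimes> b \<otimes> m)" using 0 mB by (simp add: m_assoc)
  moreover have "inv m \<otimes> b \<otimes> m \<in> B" using mB 0 by auto
  ultimately show ?case unfolding DC_def by blast
next
  case (Suc k)
  from len_decr[OF Suc.prems(1,2)] obtain t m' where tm: "t \<in> S" "m' \<in> N" "m = m' \<otimes> t" "len m' = k" by auto
  have sc: "s \<in> carrier G" "b \<in> carrier G" "t \<in> carrier G" "m' \<in> carrier G" using tm Suc.prems by auto
  have smt: "s \<otimes> m = (s \<otimes> m') \<otimes> t" using tm sc by (simp add: m_assoc)
  have "len (s \<otimes> m) \<le> Suc (len (s \<otimes> m'))" unfolding smt by (rule len_sr) (use tm Suc.prems in auto)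
  hence "k < len (s \<otimes> m')" using Suc.prems by simp
  from Suc.IH[OF tm(2) tm(4) Suc.prems(3,4) this] obtain c1 c2 where
    c: "c1 \<in> B" "c2 \<in> B" "s \<otimes> b \<otimes> m' = c1 \<otimes> (s \<otimes> m') \<otimes> c2" unfolding DC_def by auto
  have ye: "s \<otimes> b \<otimes> m = c1 \<otimes> ((s \<otimes> m') \<otimes> c2 \<otimes> t)"
  proof -
    have "s \<otimes> b \<otimes> m = (s \<otimes> b \<otimes> m') \<otimes> t" using tm sc by (simp add: m_assoc)
    thus ?thesis using c sc by (simp add: m_assoc)
  qed
  have "DC (s \<otimes> m') ((s \<otimes> m') \<otimes> c2 \<otimes> t) \<or> DC ((s \<otimes> m') \<otimes> t) ((s \<otimes> m') \<otimes> c2 \<otimes> t)"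
    by (rule T1r) (use tm c Suc.prems in auto)
  thus ?case
  proof
    assume "DC ((s \<otimes> m') \<otimes> t) ((s \<otimes> m') \<otimes> c2 \<otimes> t)"
    thus ?thesis unfolding ye smt[symmetric] using DC_lmult c(1) sc tm Suc.prems by (meson Nc Nm SNe)
  next
    assume "DC (s \<otimes> m') ((s \<otimes> m') \<otimes> c2 \<otimes> t)"
    hence "DC (s \<otimes> m') (s \<otimes> b \<otimes> m)" unfolding ye using DC_lmult c(1) sc tm Suc.prems by (meson Nc Nm SNe)
    hence "DC (s \<otimes> b \<otimes> m) (s \<otimes> m')" using DC_sym tm Suc.prems by (meson Nc Nm SNe)
    then obtain d1 d2 where d: "d1 \<in> B" "d2 \<in> B" "s \<otimes> m' = d1 \<otimes> (s \<otimes> b \<otimes> m) \<otimes> d2" unfolding DC_def by auto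
    have mc: "m \<in> carrier G" using Suc.prems by auto
    have m'e: "m' = (inv s \<otimes> d1 \<otimes> s) \<otimes> b \<otimes> m \<otimes> d2"
    proof -
      have "m' = inv s \<otimes> (s \<otimes> m')" using sc by simp
      also have "\<dots> = inv s \<otimes> (d1 \<otimes> (s \<otimes> b \<otimes> m) \<otimes> d2)" using d by simp
      finally show ?thesis using sc d mc by (simp add: m_assoc)
    qed
    have "DC s (inv s \<otimes> d1 \<otimes> s) \<or> DC (s \<otimes> s) (inv s \<otimes> d1 \<otimes> s)" by (rule T1inv) (use Suc.prems d in auto)
    thus ?thesis
    proof
      assume "DC (s \<otimes> s) (inv s \<otimes> d1 \<otimes> s)"
      hence eB: "inv s \<otimes> d1 \<otimes> s \<in> B" using DC_B sqH Suc.prems by blast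
      have "m' = (inv s \<otimes> d1 \<otimes> s \<otimes> b) \<otimes> m \<otimes> d2" using m'e by simp
      hence "DC m m'" unfolding DC_def using eB d Suc.prems by blast
      hence "len m' = len m" using lemU' tm Suc.prems by blast
      thus ?thesis using tm Suc.prems by simp
    next
      assume "DC s (inv s \<otimes> d1 \<otimes> s)"
      then obtain e1 e2 where e: "e1 \<in> B" "e2 \<in> B" "inv s \<otimes> d1 \<otimes> s = e1 \<otimes> s \<otimes> e2" unfolding DC_def by auto
      have m'e2: "m' = e1 \<otimes> (s \<otimes> (e2 \<otimes> b) \<otimes> m) \<otimes> d2" unfolding m'e e(3) using e sc mc d by (simp add: m_assoc)
      have "DC m (s \<otimes> (e2 \<otimes> b) \<otimes> m) \<or> DC (s \<otimes> m) (s \<otimes> (e2 \<otimes> b) \<otimes> m)"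
        by (rule T1e) (use Suc.prems e in auto)
      hence "DC m m' \<or> DC (s \<otimes> m) m'" unfolding m'e2 using DC_lmult DC_rmult e d Suc.prems
        by (meson Nc Nm SNe)
      hence "len m' = len m \<or> len m' = len (s \<otimes> m)" using lemU' tm Suc.prems by (meson Nm SNe)
      thus ?thesis using tm Suc.prems by auto
    qed
  qed
qed

lemma Cs_bound:
  assumes fin: "finite (carrier G)" and s: "s \<in> S"
    and hyp: "q * card B \<le> card ((B <#> {s}) <#> B)"
  shows "q * card {b\<in>B. inv s \<otimes> b \<otimes> s \<in> B} \<le> card B"
proof -
  let ?C = "{b\<in>B. inv s \<otimes> b \<otimes> s \<in> B}"
  let ?U = "(B <#> {s}) <#> B"
  have sc: "s \<in> carrier G" using s by auto
  have finB: "finite B" using fin finite_subset subgroup.subset[OF B_sub] by blast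
  have Ue: "u \<in> ?U \<longleftrightarrow> (\<exists>a1\<in>B. \<exists>a2\<in>B. u = a1 \<otimes> s \<otimes> a2)" for u unfolding set_mult_def by auto
  have "card ?U * card ?C \<le> card (B \<times> B)"
  proof (rule fiber_lower[where f="\<lambda>(b1,b2). b1 \<otimes> s \<otimes> b2"])
    show "finite (B \<times> B)" using finB by auto
    fix u assume "u \<in> ?U"
    then obtain a1 a2 where a: "a1 \<in> B" "a2 \<in> B" "u = a1 \<otimes> s \<otimes> a2" using Ue by auto
    let ?g = "\<lambda>c. (a1 \<otimes> c, inv s \<otimes> inv c \<otimes> s \<otimes> a2)"
    show "card ?C \<le> card {t \<in> B \<times> B. (\<lambda>(b1,b2). b1 \<otimes> s \<otimes> b2) t = u}"
    proof (rule card_inj_on_le)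
      show "inj_on ?g ?C" using a by (auto simp: inj_on_def)
      show "finite {t \<in> B \<times> B. (\<lambda>(b1,b2). b1 \<otimes> s \<otimes> b2) t = u}" using finB by auto
      show "?g ` ?C \<subseteq> {t \<in> B \<times> B. (\<lambda>(b1,b2). b1 \<otimes> s \<otimes> b2) t = u}"
      proof
        fix y assume "y \<in> ?g ` ?C"
        then obtain c where c: "c \<in> B" "inv s \<otimes> c \<otimes> s \<in> B" "y = ?g c" by auto
        have "inv (inv s \<otimes> c \<otimes> s) \<in> B" using c by auto
        hence i: "inv s \<otimes> inv c \<otimes> s \<in> B" using c sc by (simp add: inv_mult_group m_assoc)
        have "a1 \<otimes> c \<otimes> s \<otimes> (inv s \<otimes> inv c \<otimes> s \<otimes> a2) = u" using a c sc by (simp add: m_assoc)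
        thus "y \<in> {t \<in> B \<times> B. (\<lambda>(b1,b2). b1 \<otimes> s \<otimes> b2) t = u}" using c a i by auto
      qed
    qed
  qed
  hence "card ?U * card ?C \<le> card B * card B" by (simp add: card_cartesian_product)
  hence "q * card B * card ?C \<le> card B * card B" using hyp
    by (meson le_trans mult_le_mono1)
  hence "card B * (q * card ?C) \<le> card B * card B" by (simp add: ac_simps)
  moreover have "card B > 0" using finB by (auto simp: card_gt_0_iff)
  ultimately show ?thesis by simp
qed

definition Stab :: "'a set \<Rightarrow> 'a set \<Rightarrow> 'a \<Rightarrow> 'a set" where
  "Stab K P x = {b\<in>K. inv x \<otimes> b \<otimes> x \<in> P}"

lemma coreN:
  assumes fin: "finite (carrier G)"
    and hyp: "\<forall>s\<in>S. q * card B \<le> card ((B <#> {s}) <#> B)"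
    and P: "subgroup P G" and BP: "B \<subseteq> P" and n: "n \<in> N" and nP: "n \<notin> P"
  shows "q * card (Stab B P n) \<le> card B"
proof -
  have finB: "finite B" using fin finite_subset subgroup.subset[OF B_sub] by blast
  let ?D = "\<lambda>m. m \<in> N \<and> (\<exists>b\<in>B. \<exists>p\<in>P. m = b \<otimes> n \<otimes> p)"
  have "?D n" using n P by (intro conjI bexI[of _ \<one>]) (auto simp: subgroup.one_closed)
  have ex: "\<exists>x. ?D x \<and> (\<forall>y. ?D y \<longrightarrow> len x \<le> len y)" by (rule ex_has_least_nat[of ?D n len]) (rule \<open>?D n\<close>)
  then obtain n0 where n0all: "?D n0 \<and> (\<forall>y. ?D y \<longrightarrow> len n0 \<le> len y)" by (rule exE)
  have n0: "?D n0" by (rule conjunct1[OF n0all])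
  have mn: "\<And>y. ?D y \<Longrightarrow> len n0 \<le> len y" by (rule conjunct2[OF n0all, rule_format])
  from n0 obtain b0 p0 where bp: "b0 \<in> B" "p0 \<in> P" "n0 = b0 \<otimes> n \<otimes> p0" "n0 \<in> N" by auto
  have Pc: "\<And>p. p \<in> P \<Longrightarrow> p \<in> carrier G" using subgroup.subset[OF P] by auto
  have Pm: "\<And>a b. a \<in> P \<Longrightarrow> b \<in> P \<Longrightarrow> a \<otimes> b \<in> P" using subgroup.m_closed[OF P] by auto
  have Pi: "\<And>a. a \<in> P \<Longrightarrow> inv a \<in> P" using subgroup.m_inv_closed[OF P] by auto
  have nc: "n \<in> carrier G" using n by auto
  have "card (Stab B P n) \<le> card (Stab B P n0)"
  proof (rule card_inj_on_le[where f="\<lambda>b. b0 \<otimes> b \<otimes> inv b0"])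
    show "inj_on (\<lambda>b. b0 \<otimes> b \<otimes> inv b0) (Stab B P n)" using bp by (auto simp: inj_on_def Stab_def)
    show "finite (Stab B P n0)" using finB by (auto simp: Stab_def)
    show "(\<lambda>b. b0 \<otimes> b \<otimes> inv b0) ` Stab B P n \<subseteq> Stab B P n0"
    proof
      fix y assume "y \<in> (\<lambda>b. b0 \<otimes> b \<otimes> inv b0) ` Stab B P n"
      then obtain b where b: "b \<in> B" "inv n \<otimes> b \<otimes> n \<in> P" "y = b0 \<otimes> b \<otimes> inv b0" by (auto simp: Stab_def)
      have "inv n0 \<otimes> y \<otimes> n0 = inv p0 \<otimes> (inv n \<otimes> b \<otimes> n) \<otimes> p0"
        using b bp nc Pc by (simp add: m_assoc inv_mult_group)
      also have "\<dots> \<in> P" using b bp Pm Pi by auto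
      finally show "y \<in> Stab B P n0" using b bp by (auto simp: Stab_def)
    qed
  qed
  moreover have "q * card (Stab B P n0) \<le> card B"
  proof -
    have n0P: "n0 \<notin> P"
    proof
      assume "n0 \<in> P"
      have ne: "n = inv b0 \<otimes> n0 \<otimes> inv p0" using bp nc Pc by (simp add: m_assoc)
      have ib0: "inv b0 \<in> P" using BP bp(1) by auto
      have "inv b0 \<otimes> n0 \<otimes> inv p0 \<in> P"
        by (rule Pm[OF Pm[OF ib0 \<open>n0 \<in> P\<close>] Pi[OF bp(2)]])
      hence "n \<in> P" by (subst ne)
      thus False using nP by contradiction
    qed
    have "len n0 \<noteq> 0" using len0 bp n0P BP by auto
    then obtain k where "len n0 = Suc k" using not0_implies_Suc by blast
    from len_decl[OF bp(4) this] obtain s m where sm: "s \<in> S" "m \<in> N" "n0 = s \<otimes> m" "len m = k"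
      using \<open>len n0 = Suc k\<close> by blast
    have sc: "s \<in> carrier G" "m \<in> carrier G" using sm by auto
    have sub: "Stab B P n0 \<subseteq> {b\<in>B. inv s \<otimes> b \<otimes> s \<in> B}"
    proof
      fix b assume "b \<in> Stab B P n0"
      hence b: "b \<in> B" "inv n0 \<otimes> b \<otimes> n0 \<in> P" by (auto simp: Stab_def)
      show "b \<in> {b\<in>B. inv s \<otimes> b \<otimes> s \<in> B}"
      proof (rule ccontr)
        assume nb: "b \<notin> {b\<in>B. inv s \<otimes> b \<otimes> s \<in> B}"
        have "DC s (inv s \<otimes> b \<otimes> s) \<or> DC (s \<otimes> s) (inv s \<otimes> b \<otimes> s)" by (rule T1inv) (use sm b in auto)
        moreover have "\<not> DC (s \<otimes> s) (inv s \<otimes> b \<otimes> s)" using nb b DC_B sqH[OF sm(1)] by blast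
        ultimately obtain c1 c2 where c: "c1 \<in> B" "c2 \<in> B" "inv s \<otimes> b \<otimes> s = c1 \<otimes> s \<otimes> c2"
          unfolding DC_def by auto
        have "len m < len (s \<otimes> m)" using sm \<open>len n0 = Suc k\<close> by simp
        from lemS[OF sm(2) refl sm(1) c(2) this] obtain d1 d2 where
          d: "d1 \<in> B" "d2 \<in> B" "s \<otimes> c2 \<otimes> m = d1 \<otimes> n0 \<otimes> d2" unfolding DC_def sm(3) by auto
        define p where "p = inv n0 \<otimes> b \<otimes> n0"
        have pP: "p \<in> P" using b p_def by simp
        have pc: "p \<in> carrier G" using pP Pc by auto
        have n0c: "n0 \<in> carrier G" using bp by auto
        have e3: "b \<otimes> n0 = n0 \<otimes> p" unfolding p_def using n0c b by (simp add: m_assoc)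
        have "m \<otimes> p = inv s \<otimes> (n0 \<otimes> p)" using sm sc pc by (simp add: m_assoc)
        also have "\<dots> = inv s \<otimes> b \<otimes> s \<otimes> m" unfolding e3[symmetric] using sm sc b by (simp add: m_assoc)
        also have "\<dots> = c1 \<otimes> (s \<otimes> c2 \<otimes> m)" unfolding c(3) using sc c by (simp add: m_assoc)
        also have "\<dots> = c1 \<otimes> d1 \<otimes> n0 \<otimes> d2" unfolding d(3) using c d n0c by (simp add: m_assoc)
        finally have mp: "m \<otimes> p = c1 \<otimes> d1 \<otimes> n0 \<otimes> d2" .
        have "m = (m \<otimes> p) \<otimes> inv p" using sc pc by (simp add: m_assoc)
        also have "\<dots> = (c1 \<otimes> d1 \<otimes> b0) \<otimes> n \<otimes> (p0 \<otimes> d2 \<otimes> inv p)" unfolding mp bp(3)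
          using c d bp nc pc Pc by (simp add: m_assoc)
        finally have me: "m = (c1 \<otimes> d1 \<otimes> b0) \<otimes> n \<otimes> (p0 \<otimes> d2 \<otimes> inv p)" .
        have in1: "c1 \<otimes> d1 \<otimes> b0 \<in> B" using c d bp by auto
        have d2P: "d2 \<in> P" using BP d by auto
        have in2: "p0 \<otimes> d2 \<otimes> inv p \<in> P" by (rule Pm[OF Pm[OF bp(2) d2P] Pi[OF pP]])
        have "?D m" using sm(2) me in1 in2 by blast
        hence "len n0 \<le> len m" by (rule mn)
        thus False using sm \<open>len n0 = Suc k\<close> by simp
      qed
    qed
    have "card (Stab B P n0) \<le> card {b\<in>B. inv s \<otimes> b \<otimes> s \<in> B}"
      by (rule card_mono[OF _ sub]) (use finB in auto)
    hence "q * card (Stab B P n0) \<le> q * card {b\<in>B. inv s \<otimes> b \<otimes> s \<in> B}" by simp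
    also have "\<dots> \<le> card B" by (rule Cs_bound[OF fin sm(1)]) (use hyp sm in auto)
    finally show ?thesis .
  qed
  ultimately show ?thesis using mult_le_mono2[of "card (Stab B P n)" "card (Stab B P n0)" q] by linarith
qed

lemma coreX:
  assumes fin: "finite (carrier G)"
    and hyp: "\<forall>s\<in>S. q * card B \<le> card ((B <#> {s}) <#> B)"
    and P: "subgroup P G" and BP: "B \<subseteq> P" and x: "x \<in> carrier G" and xP: "x \<notin> P"
  shows "q * card (Stab B P x) \<le> card B"
proof -
  have finB: "finite B" using fin finite_subset subgroup.subset[OF B_sub] by blast
  have Pc: "\<And>p. p \<in> P \<Longrightarrow> p \<in> carrier G" using subgroup.subset[OF P] by auto
  have Pm: "\<And>a b. a \<in> P \<Longrightarrow> b \<in> P \<Longrightarrow> a \<otimes> b \<in> P" using subgroup.m_closed[OF P] by auto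
  have Pi: "\<And>a. a \<in> P \<Longrightarrow> inv a \<in> P" using subgroup.m_inv_closed[OF P] by auto
  from bruhat[OF x] obtain n b1 b2 where nb: "n \<in> N" "b1 \<in> B" "b2 \<in> B" "x = b1 \<otimes> n \<otimes> b2"
    unfolding DC_def by auto
  have nc: "n \<in> carrier G" using nb by auto
  have nP: "n \<notin> P"
  proof
    assume "n \<in> P"
    moreover have "b1 \<in> P" "b2 \<in> P" using BP nb by auto
    ultimately have "b1 \<otimes> n \<otimes> b2 \<in> P" by (intro Pm)
    thus False using xP nb by simp
  qed
  have "card (Stab B P x) \<le> card (Stab B P n)"
  proof (rule card_inj_on_le[where f="\<lambda>b. inv b1 \<otimes> b \<otimes> b1"])
    show "inj_on (\<lambda>b. inv b1 \<otimes> b \<otimes> b1) (Stab B P x)" using nb by (auto simp: inj_on_def Stab_def)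
    show "finite (Stab B P n)" using finB by (auto simp: Stab_def)
    show "(\<lambda>b. inv b1 \<otimes> b \<otimes> b1) ` Stab B P x \<subseteq> Stab B P n"
    proof
      fix y assume "y \<in> (\<lambda>b. inv b1 \<otimes> b \<otimes> b1) ` Stab B P x"
      then obtain b where b: "b \<in> B" "inv x \<otimes> b \<otimes> x \<in> P" "y = inv b1 \<otimes> b \<otimes> b1" by (auto simp: Stab_def)
      have "inv n \<otimes> y \<otimes> n = b2 \<otimes> (inv x \<otimes> b \<otimes> x) \<otimes> inv b2"
        using b nb nc by (simp add: m_assoc inv_mult_group)
      also have "\<dots> \<in> P" using b nb Pm Pi BP by auto
      finally show "y \<in> Stab B P n" using b nb by (auto simp: Stab_def)
    qed
  qed
  hence "q * card (Stab B P x) \<le> q * card (Stab B P n)" by simp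
  also have "\<dots> \<le> card B" by (rule coreN[OF fin hyp P BP nb(1) nP])
  finally show ?thesis .
qed

end

lemma (in group) gic1[simp]: "x \<in> carrier G \<Longrightarrow> y \<in> carrier G \<Longrightarrow> inv x \<otimes> (x \<otimes> y) = y"
  by (simp add: m_assoc[symmetric])
lemma (in group) gic2[simp]: "x \<in> carrier G \<Longrightarrow> y \<in> carrier G \<Longrightarrow> x \<otimes> (inv x \<otimes> y) = y"
  by (simp add: m_assoc[symmetric])

lemma (in group) conj_subgroup:
  assumes K: "subgroup K G" and c: "c \<in> carrier G"
  shows "subgroup {c \<otimes> k \<otimes> inv c | k. k \<in> K} G"
proof (rule subgroupI)
  have Kc: "\<And>k. k \<in> K \<Longrightarrow> k \<in> carrier G" using subgroup.subset[OF K] by auto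
  show "{c \<otimes> k \<otimes> inv c | k. k \<in> K} \<subseteq> carrier G" using c Kc by auto
  show "{c \<otimes> k \<otimes> inv c | k. k \<in> K} \<noteq> {}" using subgroup.one_closed[OF K] by auto
  fix a assume "a \<in> {c \<otimes> k \<otimes> inv c | k. k \<in> K}"
  then obtain k where k: "k \<in> K" "a = c \<otimes> k \<otimes> inv c" by auto
  have "inv a = c \<otimes> inv k \<otimes> inv c" using k c Kc by (simp add: inv_mult_group m_assoc)
  thus "inv a \<in> {c \<otimes> k \<otimes> inv c | k. k \<in> K}" using subgroup.m_inv_closed[OF K k(1)] by auto
next
  have Kc: "\<And>k. k \<in> K \<Longrightarrow> k \<in> carrier G" using subgroup.subset[OF K] by auto
  fix a b assume "a \<in> {c \<otimes> k \<otimes> inv c | k. k \<in> K}" "b \<in> {c \<otimes> k \<otimes> inv c | k. k \<in> K}"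
  then obtain k l where k: "k \<in> K" "a = c \<otimes> k \<otimes> inv c" "l \<in> K" "b = c \<otimes> l \<otimes> inv c" by auto
  have "a \<otimes> b = c \<otimes> (k \<otimes> l) \<otimes> inv c" using k c Kc by (simp add: m_assoc m_closed)
  thus "a \<otimes> b \<in> {c \<otimes> k \<otimes> inv c | k. k \<in> K}" using subgroup.m_closed[OF K k(1) k(3)] by auto
qed


locale bnP = bn +
  fixes q :: nat and P c
  assumes fin: "finite (carrier G)"
    and hyp: "\<forall>s\<in>S. q * card B \<le> card ((B <#> {s}) <#> B)"
    and P: "subgroup P G" and c: "c \<in> carrier G"
    and BoP: "{c \<otimes> b \<otimes> inv c | b. b \<in> B} \<subseteq> P"
    and q1: "q \<ge> 1"
begin

definition Bo where "Bo = {c \<otimes> b \<otimes> inv c | b. b \<in> B}"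

lemma Pc: "p \<in> P \<Longrightarrow> p \<in> carrier G" using subgroup.subset[OF P] by auto
lemma Pm: "a \<in> P \<Longrightarrow> b \<in> P \<Longrightarrow> a \<otimes> b \<in> P" using subgroup.m_closed[OF P] by auto
lemma Pi: "a \<in> P \<Longrightarrow> inv a \<in> P" using subgroup.m_inv_closed[OF P] by auto
lemma P1: "\<one> \<in> P" using subgroup.one_closed[OF P] by auto
lemma finP: "finite P" using fin finite_subset subgroup.subset[OF P] by blast
lemma finB: "finite B" using fin finite_subset subgroup.subset[OF B_sub] by blast
lemma cardP: "card P > 0" using finP P1 by (auto simp: card_gt_0_iff)

lemma Bo_sub: "subgroup Bo G" unfolding Bo_def by (rule conj_subgroup[OF B_sub c])
lemma BoP': "y \<in> Bo \<Longrightarrow> y \<in> P" using BoP unfolding Bo_def by blast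
lemma Bom: "a \<in> Bo \<Longrightarrow> b \<in> Bo \<Longrightarrow> a \<otimes> b \<in> Bo" using subgroup.m_closed[OF Bo_sub] by blast
lemma Boi: "a \<in> Bo \<Longrightarrow> inv a \<in> Bo" using subgroup.m_inv_closed[OF Bo_sub] by blast
lemma Boc: "y \<in> Bo \<Longrightarrow> y \<in> carrier G" using subgroup.subset[OF Bo_sub] by auto
lemma finBo: "finite Bo" using fin finite_subset subgroup.subset[OF Bo_sub] by blast
lemma card_Bo: "card Bo = card B"
proof -
  have "Bo = (\<lambda>b. c \<otimes> b \<otimes> inv c) ` B" unfolding Bo_def by auto
  moreover have "inj_on (\<lambda>b. c \<otimes> b \<otimes> inv c) B" using c by (auto simp: inj_on_def)
  ultimately show ?thesis by (simp add: card_image)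
qed
lemma cardBo: "card Bo > 0" using card_Bo finB B1 by (metis card_gt_0_iff empty_iff)

lemma coreBo:
  assumes x: "x \<in> carrier G" and xP: "x \<notin> P"
  shows "q * card (Stab Bo P x) \<le> card Bo"
proof -
  let ?P' = "{inv c \<otimes> p \<otimes> c | p. p \<in> P}"
  have "?P' = {inv c \<otimes> p \<otimes> inv (inv c) | p. p \<in> P}" using c by (simp add: inv_inv)
  hence P': "subgroup ?P' G" using conj_subgroup[OF P, of "inv c"] c by simp
  have BP': "B \<subseteq> ?P'"
  proof
    fix b assume b: "b \<in> B"
    have "c \<otimes> b \<otimes> inv c \<in> P" using BoP b by blast
    moreover have "b = inv c \<otimes> (c \<otimes> b \<otimes> inv c) \<otimes> c" using b c by (simp add: m_assoc)
    ultimately show "b \<in> ?P'" by blast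
  qed
  let ?x = "inv c \<otimes> x \<otimes> c"
  have xc: "?x \<in> carrier G" using x c by auto
  have xP': "?x \<notin> ?P'"
  proof
    assume "?x \<in> ?P'"
    then obtain p where p: "p \<in> P" "inv c \<otimes> x \<otimes> c = inv c \<otimes> p \<otimes> c" by auto
    have "x = c \<otimes> (inv c \<otimes> x \<otimes> c) \<otimes> inv c" using x c by (simp add: m_assoc)
    also have "\<dots> = c \<otimes> (inv c \<otimes> p \<otimes> c) \<otimes> inv c" by (simp only: p(2))
    also have "\<dots> = p" using Pc[OF p(1)] c by (simp add: m_assoc)
    finally show False using p xP by simp
  qed
  have "card (Stab Bo P x) \<le> card (Stab B ?P' ?x)"
  proof (rule card_inj_on_le[where f="\<lambda>y. inv c \<otimes> y \<otimes> c"])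
    show "inj_on (\<lambda>y. inv c \<otimes> y \<otimes> c) (Stab Bo P x)" using c Boc by (auto simp: inj_on_def Stab_def)
    show "finite (Stab B ?P' ?x)" using finB by (auto simp: Stab_def)
    show "(\<lambda>y. inv c \<otimes> y \<otimes> c) ` Stab Bo P x \<subseteq> Stab B ?P' ?x"
    proof
      fix z assume "z \<in> (\<lambda>y. inv c \<otimes> y \<otimes> c) ` Stab Bo P x"
      then obtain b where b: "b \<in> B" "inv x \<otimes> (c \<otimes> b \<otimes> inv c) \<otimes> x \<in> P" "z = inv c \<otimes> (c \<otimes> b \<otimes> inv c) \<otimes> c"
        by (auto simp: Stab_def Bo_def)
      have z: "z = b" unfolding b(3) using b(1) c by (simp add: m_assoc)
      have eq: "inv ?x \<otimes> z \<otimes> ?x = inv c \<otimes> (inv x \<otimes> (c \<otimes> b \<otimes> inv c) \<otimes> x) \<otimes> c"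
        unfolding z using b(1) c x by (simp add: m_assoc inv_mult_group)
      have mem: "\<And>w. w \<in> P \<Longrightarrow> inv c \<otimes> w \<otimes> c \<in> ?P'" by blast
      have "inv ?x \<otimes> z \<otimes> ?x \<in> ?P'" unfolding eq by (rule mem[OF b(2)])
      thus "z \<in> Stab B ?P' ?x" unfolding Stab_def using z b(1) by simp
    qed
  qed
  hence "q * card (Stab Bo P x) \<le> q * card (Stab B ?P' ?x)" by simp
  also have "\<dots> \<le> card B" by (rule coreX[OF fin hyp P' BP' xc xP'])
  finally show ?thesis using card_Bo by simp
qed

lemma K1:
  assumes z: "z \<in> carrier G" and zP: "z \<notin> P"
  shows "q * card {k\<in>P. inv z \<otimes> k \<otimes> z \<in> P} \<le> card P"
proof -
  define K where "K = {k\<in>P. inv z \<otimes> k \<otimes> z \<in> P}"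
  define St where "St = Stab Bo P z"
  have Kc: "k \<in> K \<Longrightarrow> k \<in> carrier G" for k unfolding K_def using Pc by auto
  have h: "real (card (Bo \<times> K)) \<le> real (card P) * real (card St)"
  proof (rule fiber_upper[where f="\<lambda>(b,k). b \<otimes> k"])
    show "finite P" by (rule finP)
    fix t assume "t \<in> Bo \<times> K"
    then obtain b k where "t = (b,k)" "b \<in> Bo" "k \<in> P" unfolding K_def by auto
    thus "(\<lambda>(b,k). b \<otimes> k) t \<in> P" using BoP' Pm by simp
  next
    fix u assume u: "u \<in> P"
    define F where "F = {t \<in> Bo \<times> K. (\<lambda>(b,k). b \<otimes> k) t = u}"
    have "real (card F) \<le> real (card St)"
    proof (cases "F = {}")
      case True thus ?thesis by simp
    next
      case False
      then obtain b0 k0 where t0: "b0 \<in> Bo" "k0 \<in> K" "b0 \<otimes> k0 = u" unfolding F_def by auto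
      have b0c: "b0 \<in> carrier G" "k0 \<in> carrier G" using t0 Boc Kc by auto
      have "card F \<le> card St"
      proof (rule card_inj_on_le[where f="\<lambda>(b,k). inv b0 \<otimes> b"])
        show "finite St" using finBo unfolding St_def Stab_def by auto
        show "inj_on (\<lambda>(b,k). inv b0 \<otimes> b) F"
        proof (rule inj_onI)
          fix t1 t2 assume t1: "t1 \<in> F" and t2: "t2 \<in> F" and e: "(\<lambda>(b,k). inv b0 \<otimes> b) t1 = (\<lambda>(b,k). inv b0 \<otimes> b) t2"
          obtain b1 k1 where 1: "t1 = (b1,k1)" "b1 \<in> Bo" "k1 \<in> K" "b1 \<otimes> k1 = u" using t1 unfolding F_def by auto
          obtain b2 k2 where 2: "t2 = (b2,k2)" "b2 \<in> Bo" "k2 \<in> K" "b2 \<otimes> k2 = u" using t2 unfolding F_def by auto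
          have c12: "b1 \<in> carrier G" "b2 \<in> carrier G" "k1 \<in> carrier G" "k2 \<in> carrier G" using 1 2 Boc Kc by auto
          have "inv b0 \<otimes> b1 = inv b0 \<otimes> b2" using e 1(1) 2(1) by simp
          hence bb: "b1 = b2" using c12 b0c by simp
          have "k1 = inv b1 \<otimes> (b1 \<otimes> k1)" "k2 = inv b2 \<otimes> (b2 \<otimes> k2)" using c12 by simp_all
          hence "k1 = inv b1 \<otimes> u" "k2 = inv b2 \<otimes> u" using 1(4) 2(4) by simp_all
          thus "t1 = t2" using 1(1) 2(1) bb by simp
        qed
        show "(\<lambda>(b,k). inv b0 \<otimes> b) ` F \<subseteq> St"
        proof
          fix y assume "y \<in> (\<lambda>(b,k). inv b0 \<otimes> b) ` F"
          then obtain b k where bk: "b \<in> Bo" "k \<in> K" "b \<otimes> k = u" "y = inv b0 \<otimes> b" unfolding F_def by auto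
          have kc: "k \<in> carrier G" "b \<in> carrier G" using bk Kc Boc by auto
          have kP: "k \<in> P" "inv z \<otimes> k \<otimes> z \<in> P" "k0 \<in> P" "inv z \<otimes> k0 \<otimes> z \<in> P"
            using bk(2) t0(2) unfolding K_def by auto
          have "inv b0 \<otimes> b = inv b0 \<otimes> (b \<otimes> k) \<otimes> inv k" using kc b0c by (simp add: m_assoc)
          also have "\<dots> = k0 \<otimes> inv k" unfolding bk(3) t0(3)[symmetric] using kc b0c by (simp add: m_assoc[symmetric])
          finally have yk: "y = k0 \<otimes> inv k" using bk(4) by simp
          have "inv z \<otimes> y \<otimes> z = (inv z \<otimes> k0 \<otimes> z) \<otimes> inv (inv z \<otimes> k \<otimes> z)"
            unfolding yk using z kc b0c by (simp add: m_assoc inv_mult_group inv_inv)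
          also have "\<dots> \<in> P" by (rule Pm[OF kP(4) Pi[OF kP(2)]])
          finally have "inv z \<otimes> y \<otimes> z \<in> P" .
          moreover have "y \<in> Bo" unfolding bk(4) by (rule Bom[OF Boi[OF t0(1)] bk(1)])
          ultimately show "y \<in> St" unfolding St_def Stab_def by simp
        qed
      qed
      thus ?thesis by simp
    qed
    thus "real (card {t \<in> Bo \<times> K. (\<lambda>(b,k). b \<otimes> k) t = u}) \<le> real (card St)" unfolding F_def .
  qed
  hence h2: "real (card Bo) * real (card K) \<le> real (card P) * real (card St)" by (simp add: card_cartesian_product)
  have qs: "real q * real (card St) \<le> real (card Bo)" using coreBo[OF z zP] unfolding St_def
    by (metis of_nat_le_iff of_nat_mult)
  have "real (card Bo) * (real q * real (card K)) = real q * (real (card Bo) * real (card K))" by (simp add: ac_simps)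
  also have "\<dots> \<le> real q * (real (card P) * real (card St))" by (rule mult_left_mono[OF h2]) simp
  also have "\<dots> = real (card P) * (real q * real (card St))" by (simp add: ac_simps)
  also have "\<dots> \<le> real (card P) * real (card Bo)" by (rule mult_left_mono[OF qs]) simp
  finally have "real (card Bo) * (real q * real (card K)) \<le> real (card Bo) * real (card P)" by (simp add: ac_simps)
  hence "real q * real (card K) \<le> real (card P)" using cardBo by (simp add: mult_le_cancel_left_pos)
  hence "q * card K \<le> card P" by (metis of_nat_le_iff of_nat_mult)
  thus ?thesis unfolding K_def .
qed

lemma claim4_core:
  assumes g: "g \<in> carrier G" and gP: "g \<notin> P"
  shows "q * card P \<le> card {p \<otimes> g \<otimes> b | p b. p \<in> P \<and> b \<in> Bo}"
proof -
  define U where "U = {p \<otimes> g \<otimes> b | p b. p \<in> P \<and> b \<in> Bo}"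
  define St where "St = Stab Bo P (inv g)"
  have "U \<subseteq> carrier G"
  proof
    fix y assume "y \<in> U"
    then obtain p b where pb: "p \<in> P" "b \<in> Bo" "y = p \<otimes> g \<otimes> b" unfolding U_def by blast
    show "y \<in> carrier G" unfolding pb(3) using Pc[OF pb(1)] Boc[OF pb(2)] g by simp
  qed
  hence finU: "finite U" using fin finite_subset by blast
  have h: "real (card (P \<times> Bo)) \<le> real (card U) * real (card St)"
  proof (rule fiber_upper[where f="\<lambda>(p,b). p \<otimes> g \<otimes> b"])
    show "finite U" by (rule finU)
    fix t assume "t \<in> P \<times> Bo"
    thus "(\<lambda>(p,b). p \<otimes> g \<otimes> b) t \<in> U" unfolding U_def by auto
  next
    fix u assume u: "u \<in> U"
    define F where "F = {t \<in> P \<times> Bo. (\<lambda>(p,b). p \<otimes> g \<otimes> b) t = u}"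
    have "real (card F) \<le> real (card St)"
    proof (cases "F = {}")
      case True thus ?thesis by simp
    next
      case False
      then obtain p0 b0 where t0: "p0 \<in> P" "b0 \<in> Bo" "p0 \<otimes> g \<otimes> b0 = u" unfolding F_def by auto
      have c0: "p0 \<in> carrier G" "b0 \<in> carrier G" using t0 Pc Boc by auto
      have "card F \<le> card St"
      proof (rule card_inj_on_le[where f="\<lambda>(p,b). b \<otimes> inv b0"])
        show "finite St" using finBo unfolding St_def Stab_def by auto
        show "inj_on (\<lambda>(p,b). b \<otimes> inv b0) F"
        proof (rule inj_onI)
          fix t1 t2 assume t1: "t1 \<in> F" and t2: "t2 \<in> F" and e: "(\<lambda>(p,b). b \<otimes> inv b0) t1 = (\<lambda>(p,b). b \<otimes> inv b0) t2"
          obtain p1 b1 where 1: "t1 = (p1,b1)" "p1 \<in> P" "b1 \<in> Bo" "p1 \<otimes> g \<otimes> b1 = u" using t1 unfolding F_def by auto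
          obtain p2 b2 where 2: "t2 = (p2,b2)" "p2 \<in> P" "b2 \<in> Bo" "p2 \<otimes> g \<otimes> b2 = u" using t2 unfolding F_def by auto
          have c12: "p1 \<in> carrier G" "p2 \<in> carrier G" "b1 \<in> carrier G" "b2 \<in> carrier G" using 1 2 Boc Pc by auto
          have "b1 \<otimes> inv b0 = b2 \<otimes> inv b0" using e 1(1) 2(1) by simp
          hence bb: "b1 = b2" using c12 c0 by simp
          have "p1 = (p1 \<otimes> g \<otimes> b1) \<otimes> inv b1 \<otimes> inv g" "p2 = (p2 \<otimes> g \<otimes> b2) \<otimes> inv b2 \<otimes> inv g"
            using c12 g by (simp_all add: m_assoc)
          hence "p1 = u \<otimes> inv b1 \<otimes> inv g" "p2 = u \<otimes> inv b2 \<otimes> inv g" using 1(4) 2(4) by simp_all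
          thus "t1 = t2" using 1(1) 2(1) bb by simp
        qed
        show "(\<lambda>(p,b). b \<otimes> inv b0) ` F \<subseteq> St"
        proof
          fix y assume "y \<in> (\<lambda>(p,b). b \<otimes> inv b0) ` F"
          then obtain p b where pb: "p \<in> P" "b \<in> Bo" "p \<otimes> g \<otimes> b = u" "y = b \<otimes> inv b0" unfolding F_def by auto
          have bc: "b \<in> carrier G" "p \<in> carrier G" using pb Pc Boc by auto
          have e: "p \<otimes> g \<otimes> b = p0 \<otimes> g \<otimes> b0" using pb(3) t0(3) by simp
          have "g \<otimes> y \<otimes> inv g = inv p \<otimes> (p \<otimes> g \<otimes> b) \<otimes> inv b0 \<otimes> inv g" unfolding pb(4)
            using bc c0 g by (simp add: m_assoc)
          also have "\<dots> = inv p \<otimes> p0" unfolding e using bc c0 g by (simp add: m_assoc)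
          also have "\<dots> \<in> P" by (rule Pm[OF Pi[OF pb(1)] t0(1)])
          finally have "inv (inv g) \<otimes> y \<otimes> inv g \<in> P" using g by (simp add: inv_inv)
          moreover have "y \<in> Bo" unfolding pb(4) by (rule Bom[OF pb(2) Boi[OF t0(2)]])
          ultimately show "y \<in> St" unfolding St_def Stab_def by simp
        qed
      qed
      thus ?thesis by simp
    qed
    thus "real (card {t \<in> P \<times> Bo. (\<lambda>(p,b). p \<otimes> g \<otimes> b) t = u}) \<le> real (card St)" unfolding F_def .
  qed
  hence h2: "real (card P) * real (card Bo) \<le> real (card U) * real (card St)" by (simp add: card_cartesian_product)
  have igP: "inv g \<notin> P" using gP Pi g by (metis inv_inv)
  have qs: "real q * real (card St) \<le> real (card Bo)" using coreBo[OF _ igP] g unfolding St_def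
    by (metis inv_closed of_nat_le_iff of_nat_mult)
  have "real (card Bo) * (real q * real (card P)) = real q * (real (card P) * real (card Bo))" by (simp add: ac_simps)
  also have "\<dots> \<le> real q * (real (card U) * real (card St))" by (rule mult_left_mono[OF h2]) simp
  also have "\<dots> = real (card U) * (real q * real (card St))" by (simp add: ac_simps)
  also have "\<dots> \<le> real (card U) * real (card Bo)" by (rule mult_left_mono[OF qs]) simp
  finally have "real (card Bo) * (real q * real (card P)) \<le> real (card Bo) * real (card U)" by (simp add: ac_simps)
  hence "real q * real (card P) \<le> real (card U)" using cardBo by (simp add: mult_le_cancel_left_pos)
  hence "q * card P \<le> card U" by (metis of_nat_le_iff of_nat_mult)
  thus ?thesis unfolding U_def .
qed

end

locale bnPA = bnP +
  fixes A
  assumes Ac: "A \<subseteq> carrier G" and Ane: "A \<noteq> {}"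
begin

lemma smem: "y \<in> U <#> V \<longleftrightarrow> (\<exists>u\<in>U. \<exists>v\<in>V. y = u \<otimes> v)"
  unfolding set_mult_def by auto

definition AP where "AP = A <#> P"
definition PA where "PA = P <#> A"

lemma Ace: "a \<in> A \<Longrightarrow> a \<in> carrier G" using Ac by auto
lemma finA: "finite A" using fin Ac finite_subset by blast
lemma cardA: "card A > 0" using finA Ane by (simp add: card_gt_0_iff)

lemma AP_mem: "y \<in> AP \<longleftrightarrow> (\<exists>a\<in>A. \<exists>p\<in>P. y = a \<otimes> p)" unfolding AP_def smem ..
lemma PA_mem: "y \<in> PA \<longleftrightarrow> (\<exists>p\<in>P. \<exists>a\<in>A. y = p \<otimes> a)" unfolding PA_def smem ..

lemma APc: "AP \<subseteq> carrier G"
proof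
  fix y assume "y \<in> AP" then obtain a p where "a \<in> A" "p \<in> P" "y = a \<otimes> p" using AP_mem by blast
  thus "y \<in> carrier G" using Ace Pc by simp
qed
lemma PAc: "PA \<subseteq> carrier G"
proof
  fix y assume "y \<in> PA" then obtain a p where "a \<in> A" "p \<in> P" "y = p \<otimes> a" using PA_mem by blast
  thus "y \<in> carrier G" using Ace Pc by simp
qed
lemma finAP: "finite AP" using fin APc finite_subset by blast
lemma finPA: "finite PA" using fin PAc finite_subset by blast

lemma A_AP: "A \<subseteq> AP"
proof
  fix a assume "a \<in> A" thus "a \<in> AP" unfolding AP_mem using P1 Ace by (intro bexI[of _ a] bexI[of _ \<one>]) auto
qed
lemma A_PA: "A \<subseteq> PA"
proof
  fix a assume "a \<in> A" thus "a \<in> PA" unfolding PA_mem using P1 Ace by (intro bexI[of _ a] bexI[of _ \<one>]) auto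
qed

lemma PA_linv: "p \<in> P \<Longrightarrow> y \<in> PA \<Longrightarrow> p \<otimes> y \<in> PA"
proof -
  assume p: "p \<in> P" and "y \<in> PA"
  then obtain p1 a where pa: "p1 \<in> P" "a \<in> A" "y = p1 \<otimes> a" using PA_mem by blast
  have "p \<otimes> y = (p \<otimes> p1) \<otimes> a" using pa p Pc Ace by (simp add: m_assoc)
  thus ?thesis unfolding PA_mem using Pm[OF p pa(1)] pa(2) by blast
qed

lemma AP_rinv: "p \<in> P \<Longrightarrow> y \<in> AP \<Longrightarrow> y \<otimes> p \<in> AP"
proof -
  assume p: "p \<in> P" and "y \<in> AP"
  then obtain p1 a where pa: "p1 \<in> P" "a \<in> A" "y = a \<otimes> p1" using AP_mem by blast
  have "y \<otimes> p = a \<otimes> (p1 \<otimes> p)" using pa p Pc Ace by (simp add: m_assoc)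
  thus ?thesis unfolding AP_mem using Pm[OF pa(1) p] pa(2) by blast
qed

lemma cardAP: "card A \<le> card AP" using A_AP finAP card_mono by blast
lemma cardPA: "card A \<le> card PA" using A_PA finPA card_mono by blast

lemma Ya_bound:
  assumes a: "a \<in> A" and aP: "a \<notin> P"
  shows "real q * real (card {a'\<in>A. inv a \<otimes> a' \<in> P}) \<le> real (card PA)"
proof -
  define Ya where "Ya = {a'\<in>A. inv a \<otimes> a' \<in> P}"
  have ac: "a \<in> carrier G" using a Ace by auto
  have Yac: "y \<in> Ya \<Longrightarrow> y \<in> carrier G" for y unfolding Ya_def using Ace by auto
  have finYa: "finite Ya" unfolding Ya_def using finA by auto
  have YnP: "y \<in> Ya \<Longrightarrow> y \<notin> P" for y
  proof
    assume y: "y \<in> Ya" "y \<in> P"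
    have "inv a \<otimes> y \<in> P" using y(1) unfolding Ya_def by auto
    hence "(inv a \<otimes> y) \<otimes> inv y \<in> P" by (rule Pm[OF _ Pi[OF y(2)]])
    hence "inv a \<in> P" using ac Yac[OF y(1)] by (simp add: m_assoc)
    hence "inv (inv a) \<in> P" by (rule Pi)
    hence "a \<in> P" using ac by (simp add: inv_inv)
    thus False using aP by simp
  qed
  define T where "T = P \<times> Ya"
  define f where "f = (\<lambda>(p,y). p \<otimes> y)"
  define Q where "Q = {(t,t'). t \<in> T \<and> t' \<in> T \<and> f t = f t'}"
  define Z where "Z = {(y,y'). y \<in> Ya \<and> y' \<in> Ya \<and> y' \<otimes> inv y \<in> P}"
  have finT: "finite T" unfolding T_def using finP finYa by auto
  have fT: "f ` T \<subseteq> PA"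
  proof
    fix w assume "w \<in> f ` T"
    then obtain p y where "p \<in> P" "y \<in> Ya" "w = p \<otimes> y" unfolding T_def f_def by auto
    thus "w \<in> PA" unfolding PA_mem Ya_def by blast
  qed
  have g1: "real (card T)^2 \<le> real (card (f ` T)) * real (card Q)" unfolding Q_def by (rule gcs[OF finT])
  have cQ: "card Q \<le> card (Z \<times> P)"
  proof (rule card_inj_on_le[where f="\<lambda>((p,y),(p',y')). ((y,y'),p)"])
    show "finite (Z \<times> P)" unfolding Z_def using finP finYa by (auto intro: finite_subset[of _ "Ya \<times> Ya"])
    show "inj_on (\<lambda>((p,y),(p',y')). ((y,y'),p)) Q"
    proof (rule inj_onI)
      fix u v assume u: "u \<in> Q" and v: "v \<in> Q" and e: "(\<lambda>((p,y),(p',y')). ((y,y'),p)) u = (\<lambda>((p,y),(p',y')). ((y,y'),p)) v"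
      obtain p y p' y' where uu: "u = ((p,y),(p',y'))" "p \<in> P" "y \<in> Ya" "p' \<in> P" "y' \<in> Ya" "p \<otimes> y = p' \<otimes> y'"
        using u unfolding Q_def T_def f_def by auto
      obtain r z r' z' where vv: "v = ((r,z),(r',z'))" "r \<in> P" "z \<in> Ya" "r' \<in> P" "z' \<in> Ya" "r \<otimes> z = r' \<otimes> z'"
        using v unfolding Q_def T_def f_def by auto
      have eq: "p = r" "y = z" "y' = z'" using e uu(1) vv(1) by auto
      have "p' = (p \<otimes> y) \<otimes> inv y'" using uu Pc Yac by (simp add: m_assoc)
      moreover have "r' = (r \<otimes> z) \<otimes> inv z'" using vv Pc Yac by (simp add: m_assoc)
      ultimately have "p' = r'" using eq by simp
      thus "u = v" using uu(1) vv(1) eq by simp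
    qed
    show "(\<lambda>((p,y),(p',y')). ((y,y'),p)) ` Q \<subseteq> Z \<times> P"
    proof
      fix w assume "w \<in> (\<lambda>((p,y),(p',y')). ((y,y'),p)) ` Q"
      then obtain p y p' y' where uu: "w = ((y,y'),p)" "p \<in> P" "y \<in> Ya" "p' \<in> P" "y' \<in> Ya" "p \<otimes> y = p' \<otimes> y'"
        unfolding Q_def T_def f_def by auto
      have cc: "p \<in> carrier G" "p' \<in> carrier G" "y \<in> carrier G" "y' \<in> carrier G" using uu Pc Yac by auto
      have "p' \<otimes> y' \<otimes> inv y = p \<otimes> y \<otimes> inv y" using uu(6) by simp
      hence "p' \<otimes> (y' \<otimes> inv y) = p" using cc by (simp add: m_assoc)
      hence "inv p' \<otimes> (p' \<otimes> (y' \<otimes> inv y)) = inv p' \<otimes> p" by simp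
      hence "y' \<otimes> inv y = inv p' \<otimes> p" using cc by simp
      also have "\<dots> \<in> P" by (rule Pm[OF Pi[OF uu(4)] uu(2)])
      finally show "w \<in> Z \<times> P" unfolding Z_def using uu by simp
    qed
  qed
  have cZ: "real (card Z) \<le> real (card Ya) * (real (card P) / real q)"
  proof (rule fiber_upper[where f=fst])
    show "finite Ya" by (rule finYa)
    fix t assume "t \<in> Z" thus "fst t \<in> Ya" unfolding Z_def by auto
  next
    fix y assume y: "y \<in> Ya"
    define K where "K = {k\<in>P. inv (inv y) \<otimes> k \<otimes> inv y \<in> P}"
    have yc: "y \<in> carrier G" using Yac y by auto
    have "card {t \<in> Z. fst t = y} \<le> card K"
    proof (rule card_inj_on_le[where f="\<lambda>(y1,y'). inv y \<otimes> y'"])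
      show "finite K" unfolding K_def using finP by auto
      show "inj_on (\<lambda>(y1,y'). inv y \<otimes> y') {t \<in> Z. fst t = y}"
        by (rule inj_onI) (auto simp: Z_def yc Yac)
      show "(\<lambda>(y1,y'). inv y \<otimes> y') ` {t \<in> Z. fst t = y} \<subseteq> K"
      proof
        fix w assume "w \<in> (\<lambda>(y1,y'). inv y \<otimes> y') ` {t \<in> Z. fst t = y}"
        then obtain y' where yy: "y' \<in> Ya" "y' \<otimes> inv y \<in> P" "w = inv y \<otimes> y'" unfolding Z_def by auto
        have y'c: "y' \<in> carrier G" using Yac yy by auto
        have i1: "inv a \<otimes> y \<in> P" "inv a \<otimes> y' \<in> P" using y yy unfolding Ya_def by auto
        have "w = inv (inv a \<otimes> y) \<otimes> (inv a \<otimes> y')" unfolding yy(3) using ac yc y'c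
          by (simp add: inv_mult_group m_assoc inv_inv)
        also have "\<dots> \<in> P" by (rule Pm[OF Pi[OF i1(1)] i1(2)])
        finally have wP: "w \<in> P" .
        have "inv (inv y) \<otimes> w \<otimes> inv y = y' \<otimes> inv y" unfolding yy(3) using yc y'c by (simp add: inv_inv m_assoc)
        thus "w \<in> K" unfolding K_def using wP yy(2) by simp
      qed
    qed
    moreover have "q * card K \<le> card P"
    proof -
      have iyP: "inv y \<notin> P"
      proof
        assume "inv y \<in> P"
        hence "inv (inv y) \<in> P" by (rule Pi)
        thus False using YnP[OF y] yc by (simp add: inv_inv)
      qed
      show ?thesis unfolding K_def by (rule K1[OF inv_closed[OF yc] iyP])
    qed
    ultimately have "real q * real (card {t \<in> Z. fst t = y}) \<le> real (card P)"
      by (metis (no_types, lifting) le_trans mult_le_mono2 of_nat_le_iff of_nat_mult)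
    thus "real (card {t \<in> Z. fst t = y}) \<le> real (card P) / real q" using q1 by (simp add: field_simps)
  qed
  have "real (card P * card Ya)^2 \<le> real (card PA) * real (card Q)"
  proof -
    have "real (card (f ` T)) \<le> real (card PA)" using card_mono[OF finPA fT] by simp
    hence "real (card (f ` T)) * real (card Q) \<le> real (card PA) * real (card Q)" by (rule mult_right_mono) simp
    thus ?thesis using g1 unfolding T_def by (simp add: card_cartesian_product)
  qed
  also have "\<dots> \<le> real (card PA) * (real (card Ya) * (real (card P) / real q) * real (card P))"
  proof -
    have "card Q \<le> card Z * card P" using cQ by (simp add: card_cartesian_product)
    hence "real (card Q) \<le> real (card Z) * real (card P)" by (metis of_nat_le_iff of_nat_mult)
    also have "\<dots> \<le> real (card Ya) * (real (card P) / real q) * real (card P)" by (rule mult_right_mono[OF cZ]) simp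
    finally show ?thesis by (rule mult_left_mono) simp
  qed
  finally have main: "(real (card P) * real (card Ya))^2 \<le> real (card PA) * (real (card Ya) * (real (card P) / real q) * real (card P))"
    by simp
  show ?thesis
  proof (cases "card Ya = 0")
    case True thus ?thesis unfolding Ya_def[symmetric] by simp
  next
    case False
    have pos: "real (card P) * real (card P) * real (card Ya) > 0" using False cardP by simp
    have qpos: "real q > 0" using q1 by simp
    let ?M = "real (card P) * real (card P) * real (card Ya)"
    have e1: "(real (card P) * real (card Ya))^2 = ?M * real (card Ya)" by (simp add: power2_eq_square)
    have e2: "real (card PA) * (real (card Ya) * (real (card P) / real q) * real (card P)) = (?M * real (card PA)) / real q"
      using qpos by (simp add: field_simps)
    from main have "?M * real (card Ya) \<le> (?M * real (card PA)) / real q" unfolding e1 e2 .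
    hence "?M * real (card Ya) * real q \<le> ?M * real (card PA)" using pos_le_divide_eq[OF qpos] by blast
    hence "?M * (real q * real (card Ya)) \<le> ?M * real (card PA)" by (simp add: ac_simps)
    hence "real q * real (card Ya) \<le> real (card PA)" using pos by (simp add: mult_le_cancel_left_pos)
    thus ?thesis unfolding Ya_def .
  qed
qed

end

context bnPA begin

lemma claim1_core:
  defines "A' \<equiv> A - P"
  shows "real q * real (card A') * real (card P) \<le> real (card AP) * real (card PA)"
proof (cases "card A' = 0")
  case True thus ?thesis by simp
next
  case False
  have finA': "finite A'" unfolding A'_def using finA by auto
  have A'c: "a \<in> A' \<Longrightarrow> a \<in> carrier G" for a unfolding A'_def using Ace by auto
  define T where "T = A' \<times> P"
  define f where "f = (\<lambda>(a,p). a \<otimes> p)"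
  define Q where "Q = {(t,t'). t \<in> T \<and> t' \<in> T \<and> f t = f t'}"
  define Z where "Z = {(a,a'). a \<in> A' \<and> a' \<in> A' \<and> inv a \<otimes> a' \<in> P}"
  have finT: "finite T" unfolding T_def using finP finA' by auto
  have fT: "f ` T \<subseteq> AP"
  proof
    fix w assume "w \<in> f ` T"
    then obtain p a where "p \<in> P" "a \<in> A'" "w = a \<otimes> p" unfolding T_def f_def by auto
    thus "w \<in> AP" unfolding AP_mem A'_def by blast
  qed
  have g1: "real (card T)^2 \<le> real (card (f ` T)) * real (card Q)" unfolding Q_def by (rule gcs[OF finT])
  have cQ: "card Q \<le> card (Z \<times> P)"
  proof (rule card_inj_on_le[where f="\<lambda>((a,p),(a',p')). ((a,a'),p)"])
    show "finite (Z \<times> P)" unfolding Z_def using finP finA' by (auto intro: finite_subset[of _ "A' \<times> A'"])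
    show "inj_on (\<lambda>((a,p),(a',p')). ((a,a'),p)) Q"
    proof (rule inj_onI)
      fix u v assume u: "u \<in> Q" and v: "v \<in> Q" and e: "(\<lambda>((a,p),(a',p')). ((a,a'),p)) u = (\<lambda>((a,p),(a',p')). ((a,a'),p)) v"
      obtain a p a' p' where uu: "u = ((a,p),(a',p'))" "a \<in> A'" "p \<in> P" "a' \<in> A'" "p' \<in> P" "a \<otimes> p = a' \<otimes> p'"
        using u unfolding Q_def T_def f_def by auto
      obtain b r b' r' where vv: "v = ((b,r),(b',r'))" "b \<in> A'" "r \<in> P" "b' \<in> A'" "r' \<in> P" "b \<otimes> r = b' \<otimes> r'"
        using v unfolding Q_def T_def f_def by auto
      have eq: "a = b" "p = r" "a' = b'" using e uu(1) vv(1) by auto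
      have "p' = inv a' \<otimes> (a \<otimes> p)" using uu Pc A'c by simp
      moreover have "r' = inv b' \<otimes> (b \<otimes> r)" using vv Pc A'c by simp
      ultimately have "p' = r'" using eq by simp
      thus "u = v" using uu(1) vv(1) eq by simp
    qed
    show "(\<lambda>((a,p),(a',p')). ((a,a'),p)) ` Q \<subseteq> Z \<times> P"
    proof
      fix w assume "w \<in> (\<lambda>((a,p),(a',p')). ((a,a'),p)) ` Q"
      then obtain a p a' p' where uu: "w = ((a,a'),p)" "a \<in> A'" "p \<in> P" "a' \<in> A'" "p' \<in> P" "a \<otimes> p = a' \<otimes> p'"
        unfolding Q_def T_def f_def by auto
      have cc: "p \<in> carrier G" "p' \<in> carrier G" "a \<in> carrier G" "a' \<in> carrier G" using uu Pc A'c by auto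
      have "a \<otimes> p \<otimes> inv p' = a' \<otimes> p' \<otimes> inv p'" using uu(6) by simp
      hence "a \<otimes> (p \<otimes> inv p') = a'" using cc by (simp add: m_assoc)
      hence "inv a \<otimes> (a \<otimes> (p \<otimes> inv p')) = inv a \<otimes> a'" by simp
      hence "inv a \<otimes> a' = p \<otimes> inv p'" using cc by simp
      also have "\<dots> \<in> P" by (rule Pm[OF uu(3) Pi[OF uu(5)]])
      finally show "w \<in> Z \<times> P" unfolding Z_def using uu by simp
    qed
  qed
  have cZ: "real (card Z) \<le> real (card A') * (real (card PA) / real q)"
  proof (rule fiber_upper[where f=fst])
    show "finite A'" by (rule finA')
    fix t assume "t \<in> Z" thus "fst t \<in> A'" unfolding Z_def by auto
  next
    fix a assume a: "a \<in> A'"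
    have "card {t \<in> Z. fst t = a} \<le> card {a'\<in>A. inv a \<otimes> a' \<in> P}"
    proof (rule card_inj_on_le[where f="snd"])
      show "finite {a'\<in>A. inv a \<otimes> a' \<in> P}" using finA by auto
      show "inj_on snd {t \<in> Z. fst t = a}" by (rule inj_onI) auto
      show "snd ` {t \<in> Z. fst t = a} \<subseteq> {a'\<in>A. inv a \<otimes> a' \<in> P}" unfolding Z_def A'_def by auto
    qed
    moreover have "real q * real (card {a'\<in>A. inv a \<otimes> a' \<in> P}) \<le> real (card PA)"
      by (rule Ya_bound) (use a in \<open>auto simp: A'_def\<close>)
    ultimately have "real q * real (card {t \<in> Z. fst t = a}) \<le> real (card PA)"
      by (smt (verit) mult_left_mono of_nat_0_le_iff of_nat_le_iff)
    thus "real (card {t \<in> Z. fst t = a}) \<le> real (card PA) / real q" using q1 by (simp add: field_simps)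
  qed
  have qpos: "real q > 0" using q1 by simp
  have "real (card A' * card P)^2 \<le> real (card AP) * real (card Q)"
  proof -
    have "real (card (f ` T)) \<le> real (card AP)" using card_mono[OF finAP fT] by simp
    hence "real (card (f ` T)) * real (card Q) \<le> real (card AP) * real (card Q)" by (rule mult_right_mono) simp
    thus ?thesis using g1 unfolding T_def by (simp add: card_cartesian_product)
  qed
  also have "\<dots> \<le> real (card AP) * (real (card A') * (real (card PA) / real q) * real (card P))"
  proof -
    have "card Q \<le> card Z * card P" using cQ by (simp add: card_cartesian_product)
    hence "real (card Q) \<le> real (card Z) * real (card P)" by (metis of_nat_le_iff of_nat_mult)
    also have "\<dots> \<le> real (card A') * (real (card PA) / real q) * real (card P)" by (rule mult_right_mono[OF cZ]) simp
    finally show ?thesis by (rule mult_left_mono) simp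
  qed
  finally have main: "(real (card A') * real (card P))^2 \<le> real (card AP) * (real (card A') * (real (card PA) / real q) * real (card P))"
    by simp
  let ?M = "real (card A') * real (card P)"
  have pos: "?M > 0" using False cardP by simp
  have e1: "(real (card A') * real (card P))^2 = ?M * ?M" by (simp add: power2_eq_square)
  have e2: "real (card AP) * (real (card A') * (real (card PA) / real q) * real (card P)) = (?M * (real (card AP) * real (card PA))) / real q"
    using qpos by (simp add: field_simps)
  from main have "?M * ?M \<le> (?M * (real (card AP) * real (card PA))) / real q" unfolding e1 e2 .
  hence "?M * ?M * real q \<le> ?M * (real (card AP) * real (card PA))" using pos_le_divide_eq[OF qpos] by blast
  hence "?M * (real q * ?M) \<le> ?M * (real (card AP) * real (card PA))" by (simp add: ac_simps)
  hence "real q * ?M \<le> real (card AP) * real (card PA)" using pos by (simp add: mult_le_cancel_left_pos)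
  thus ?thesis by (simp add: ac_simps)
qed

lemma claim1:
  "real (card AP) * real (card (A \<inter> P)) \<ge> real (card A) ^ 2 / 2
   \<or> real (card AP) * real (card PA) \<ge> real (card A) * real (card P) * real q / 4"
proof (cases "2 * card (A \<inter> P) \<ge> card A")
  case True
  have "real (card A) ^ 2 / 2 = real (card A) * (real (card A) / 2)" by (simp add: power2_eq_square)
  also have "\<dots> \<le> real (card AP) * real (card (A \<inter> P))"
    using True cardAP by (intro mult_mono) auto
  finally show ?thesis by simp
next
  case False
  have "card (A - P) = card A - card (A \<inter> P)" using finA by (metis Diff_Int card_Diff_subset_Int finite_Int)
  moreover have "card (A \<inter> P) \<le> card A" using finA by (simp add: card_mono)
  ultimately have c: "real (card (A - P)) \<ge> real (card A) / 2" using False by simp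
  have "real q * (real (card A) / 2) * real (card P) \<le> real q * real (card (A - P)) * real (card P)"
    using c by (intro mult_right_mono mult_left_mono) auto
  also have "\<dots> \<le> real (card AP) * real (card PA)" by (rule claim1_core)
  finally have "real (card A) * real (card P) * real q / 2 \<le> real (card AP) * real (card PA)" by (simp add: ac_simps)
  moreover have "real (card A) * real (card P) * real q / 4 \<le> real (card A) * real (card P) * real q / 2" by simp
  ultimately show ?thesis by linarith
qed

lemma claim2:
  "real (max (card AP) (card PA)) \<ge>
       (if A \<inter> P = {} then sqrt (real (card A) * real (card P) * real q) / 2
        else min (real (card A) ^ 2 / real (card (A \<inter> P)))
                 (sqrt (real (card A) * real (card P) * real q)) / 2)"
proof -
  let ?m = "real (max (card AP) (card PA))"
  let ?s = "sqrt (real (card A) * real (card P) * real q)"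
  have m1: "real (card AP) \<le> ?m" and m2: "real (card PA) \<le> ?m" by auto
  have sq: "?s / 2 \<le> ?m" if h: "real (card AP) * real (card PA) \<ge> real (card A) * real (card P) * real q / 4"
  proof -
    have "real (card AP) * real (card PA) \<le> ?m * ?m" using m1 m2 by (intro mult_mono) auto
    hence "real (card A) * real (card P) * real q \<le> (2 * ?m)^2" using h by (simp add: power2_eq_square)
    hence "?s \<le> sqrt ((2 * ?m)^2)" by (rule real_sqrt_le_mono)
    also have "\<dots> = 2 * ?m" by (rule real_sqrt_abs[THEN trans]) simp
    finally show ?thesis by simp
  qed
  show ?thesis
  proof (cases "real (card AP) * real (card PA) \<ge> real (card A) * real (card P) * real q / 4")
    case True
    hence "?s / 2 \<le> ?m" by (rule sq)
    moreover have "min (real (card A) ^ 2 / real (card (A \<inter> P))) ?s / 2 \<le> ?s / 2" by simp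
    ultimately show ?thesis by auto
  next
    case False
    hence h: "real (card AP) * real (card (A \<inter> P)) \<ge> real (card A) ^ 2 / 2" using claim1 by auto
    have nz: "A \<inter> P \<noteq> {}"
    proof
      assume "A \<inter> P = {}"
      hence "real (card A) ^ 2 / 2 \<le> 0" using h by simp
      thus False using cardA by simp
    qed
    have cpos: "real (card (A \<inter> P)) > 0" using nz finA by (simp add: card_gt_0_iff)
    have "real (card A) ^ 2 / real (card (A \<inter> P)) / 2 \<le> real (card AP)"
      using h cpos by (simp add: field_simps)
    hence "real (card A) ^ 2 / real (card (A \<inter> P)) / 2 \<le> ?m" using m1 by linarith
    moreover have "min (real (card A) ^ 2 / real (card (A \<inter> P))) ?s / 2 \<le> real (card A) ^ 2 / real (card (A \<inter> P)) / 2"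
      by simp
    ultimately show ?thesis using nz by simp
  qed
qed

end

lemma (in group) sw1:
  assumes "a \<otimes> b = c \<otimes> d" "a \<in> carrier G" "b \<in> carrier G" "c \<in> carrier G" "d \<in> carrier G"
  shows "b \<otimes> inv d = inv a \<otimes> c"
proof -
  have "inv a \<otimes> (a \<otimes> b) = b" using assms(2-5) by simp
  hence "b \<otimes> inv d = inv a \<otimes> (a \<otimes> b) \<otimes> inv d" by simp
  also have "\<dots> = inv a \<otimes> (c \<otimes> d) \<otimes> inv d" using assms(1) by simp
  also have "\<dots> = inv a \<otimes> c" using assms by (simp add: m_assoc)
  finally show ?thesis .
qed

lemma (in group) sw2:
  assumes "a \<otimes> b = c \<otimes> d" "a \<in> carrier G" "b \<in> carrier G" "c \<in> carrier G" "d \<in> carrier G"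
  shows "inv a \<otimes> c = b \<otimes> inv d"
  using sw1[OF assms] by simp

lemma (in group) solve_l:
  assumes "a \<otimes> b = u" "a \<in> carrier G" "b \<in> carrier G"
  shows "b = inv a \<otimes> u"
  using assms by (auto simp: m_assoc[symmetric])

lemma (in group) solve_r:
  assumes "a \<otimes> b = u" "a \<in> carrier G" "b \<in> carrier G"
  shows "a = u \<otimes> inv b"
  using assms by (auto simp: m_assoc)

context bnPA begin

lemma sig1_bound:
  "real (card {(a,a'). a \<in> A \<and> a' \<in> A \<and> inv a \<otimes> a' \<in> P}) \<le> real (sigma_count G P (set_inv A) A)"
proof -
  let ?Z = "{(a,a'). a \<in> A \<and> a' \<in> A \<and> inv a \<otimes> a' \<in> P}"
  let ?F = "\<lambda>z. {(x, y). x \<in> set_inv A \<and> y \<in> A \<and> x \<otimes> y = z}"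
  have fU: "finite (\<Union>z\<in>P. ?F z)"
  proof (rule finite_subset)
    show "(\<Union>z\<in>P. ?F z) \<subseteq> (set_inv A) \<times> A" by auto
    show "finite ((set_inv A) \<times> A)" using finA unfolding SET_INV_def by auto
  qed
  have "card ?Z \<le> card (\<Union>z\<in>P. ?F z)"
  proof (rule card_inj_on_le[where f="\<lambda>(a,a'). (inv a, a')"])
    show "inj_on (\<lambda>(a,a'). (inv a, a')) ?Z" by (rule inj_onI) (auto simp: Ace)
    show "(\<lambda>(a,a'). (inv a, a')) ` ?Z \<subseteq> (\<Union>z\<in>P. ?F z)" unfolding SET_INV_def by auto
  qed (rule fU)
  also have "\<dots> \<le> (\<Sum>z\<in>P. card (?F z))" by (rule card_UN_le[OF finP])
  also have "\<dots> = sigma_count G P (set_inv A) A" unfolding sigma_count_def rep_count_def ..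
  finally show ?thesis by simp
qed

lemma sig2_bound:
  "real (card {(a,a'). a \<in> A \<and> a' \<in> A \<and> a' \<otimes> inv a \<in> P}) \<le> real (sigma_count G P A (set_inv A))"
proof -
  let ?Z = "{(a,a'). a \<in> A \<and> a' \<in> A \<and> a' \<otimes> inv a \<in> P}"
  let ?F = "\<lambda>z. {(x, y). x \<in> A \<and> y \<in> set_inv A \<and> x \<otimes> y = z}"
  have fU: "finite (\<Union>z\<in>P. ?F z)"
  proof (rule finite_subset)
    show "(\<Union>z\<in>P. ?F z) \<subseteq> A \<times> (set_inv A)" by auto
    show "finite (A \<times> (set_inv A))" using finA unfolding SET_INV_def by auto
  qed
  have "card ?Z \<le> card (\<Union>z\<in>P. ?F z)"
  proof (rule card_inj_on_le[where f="\<lambda>(a,a'). (a', inv a)"])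
    show "inj_on (\<lambda>(a,a'). (a', inv a)) ?Z" by (rule inj_onI) (auto simp: Ace)
    show "(\<lambda>(a,a'). (a', inv a)) ` ?Z \<subseteq> (\<Union>z\<in>P. ?F z)" unfolding SET_INV_def by auto
  qed (rule fU)
  also have "\<dots> \<le> (\<Sum>z\<in>P. card (?F z))" by (rule card_UN_le[OF finP])
  also have "\<dots> = sigma_count G P A (set_inv A)" unfolding sigma_count_def rep_count_def ..
  finally show ?thesis by simp
qed

lemma sq_cancel:
  fixes M R k :: real
  assumes "M^2 \<le> R * (k * M)" "M > 0" "R \<ge> 0"
  shows "M \<le> R * k"
proof -
  have "M * M \<le> M * (R * k)" using assms(1) by (simp add: power2_eq_square ac_simps)
  thus ?thesis using assms(2) by (simp add: mult_le_cancel_left_pos)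
qed

lemma X_bound: "real (card A)^2 * real (card P) \<le> real (card AP) * real (sigma_count G P (set_inv A) A)"
proof -
  define T where "T = A \<times> P"
  define f where "f = (\<lambda>(a,p). a \<otimes> p)"
  define Q where "Q = {(t,t'). t \<in> T \<and> t' \<in> T \<and> f t = f t'}"
  define Z where "Z = {(a,a'). a \<in> A \<and> a' \<in> A \<and> inv a \<otimes> a' \<in> P}"
  have finT: "finite T" unfolding T_def using finP finA by auto
  have fT: "f ` T \<subseteq> AP"
  proof
    fix w assume "w \<in> f ` T"
    then obtain p a where "p \<in> P" "a \<in> A" "w = a \<otimes> p" unfolding T_def f_def by auto
    thus "w \<in> AP" unfolding AP_mem by blast
  qed
  have g1: "real (card T)^2 \<le> real (card (f ` T)) * real (card Q)" unfolding Q_def by (rule gcs[OF finT])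
  have cQ: "card Q \<le> card (Z \<times> P)"
  proof (rule card_inj_on_le[where f="\<lambda>((a,p),(a',p')). ((a,a'),p)"])
    show "finite (Z \<times> P)" unfolding Z_def using finP finA by (auto intro: finite_subset[of _ "A \<times> A"])
    show "inj_on (\<lambda>((a,p),(a',p')). ((a,a'),p)) Q"
    proof (rule inj_onI)
      fix u v assume u: "u \<in> Q" and v: "v \<in> Q" and e: "(\<lambda>((a,p),(a',p')). ((a,a'),p)) u = (\<lambda>((a,p),(a',p')). ((a,a'),p)) v"
      obtain a p a' p' where uu: "u = ((a,p),(a',p'))" "a \<in> A" "p \<in> P" "a' \<in> A" "p' \<in> P" "a \<otimes> p = a' \<otimes> p'"
        using u unfolding Q_def T_def f_def by auto
      obtain b r b' r' where vv: "v = ((b,r),(b',r'))" "b \<in> A" "r \<in> P" "b' \<in> A" "r' \<in> P" "b \<otimes> r = b' \<otimes> r'"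
        using v unfolding Q_def T_def f_def by auto
      have eq: "a = b" "p = r" "a' = b'" using e uu(1) vv(1) by auto
      have "p' = inv a' \<otimes> (a \<otimes> p)" using solve_l[OF uu(6)[symmetric]] uu Pc Ace by simp
      moreover have "r' = inv b' \<otimes> (b \<otimes> r)" using solve_l[OF vv(6)[symmetric]] vv Pc Ace by simp
      ultimately have "p' = r'" using eq by simp
      thus "u = v" using uu(1) vv(1) eq by simp
    qed
    show "(\<lambda>((a,p),(a',p')). ((a,a'),p)) ` Q \<subseteq> Z \<times> P"
    proof
      fix w assume "w \<in> (\<lambda>((a,p),(a',p')). ((a,a'),p)) ` Q"
      then obtain a p a' p' where uu: "w = ((a,a'),p)" "a \<in> A" "p \<in> P" "a' \<in> A" "p' \<in> P" "a \<otimes> p = a' \<otimes> p'"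
        unfolding Q_def T_def f_def by auto
      have "inv a \<otimes> a' = p \<otimes> inv p'" by (rule sw2[OF uu(6)]) (use uu Pc Ace in auto)
      also have "\<dots> \<in> P" by (rule Pm[OF uu(3) Pi[OF uu(5)]])
      finally show "w \<in> Z \<times> P" unfolding Z_def using uu by simp
    qed
  qed
  have "real (card A * card P)^2 \<le> real (card AP) * real (card Q)"
  proof -
    have "real (card (f ` T)) \<le> real (card AP)" using card_mono[OF finAP fT] by simp
    hence "real (card (f ` T)) * real (card Q) \<le> real (card AP) * real (card Q)" by (rule mult_right_mono) simp
    thus ?thesis using g1 unfolding T_def by (simp add: card_cartesian_product)
  qed
  also have "\<dots> \<le> real (card AP) * (real (sigma_count G P (set_inv A) A) * real (card P))"
  proof -
    have "card Q \<le> card Z * card P" using cQ by (simp add: card_cartesian_product)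
    hence "real (card Q) \<le> real (card Z) * real (card P)" by (metis of_nat_le_iff of_nat_mult)
    also have "\<dots> \<le> real (sigma_count G P (set_inv A) A) * real (card P)"
      by (rule mult_right_mono[OF sig1_bound[folded Z_def]]) simp
    finally show ?thesis by (rule mult_left_mono) simp
  qed
  finally have "(real (card A) * real (card P))^2 \<le> real (card AP) * (real (sigma_count G P (set_inv A) A) * real (card P))"
    by simp
  hence "(real (card A) * real (card P))^2 \<le> real (card AP) * real (sigma_count G P (set_inv A) A) * real (card P)"
    by (simp add: ac_simps)
  hence "real (card A)^2 * real (card P) * real (card P) \<le> (real (card AP) * real (sigma_count G P (set_inv A) A)) * real (card P)"
    by (simp add: power2_eq_square ac_simps)
  thus ?thesis using cardP by simp
qed

lemma Y_bound: "real (card A)^2 * real (card P) \<le> real (card PA) * real (sigma_count G P A (set_inv A))"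
proof -
  define T where "T = P \<times> A"
  define f where "f = (\<lambda>(p,a). p \<otimes> a)"
  define Q where "Q = {(t,t'). t \<in> T \<and> t' \<in> T \<and> f t = f t'}"
  define Z where "Z = {(a,a'). a \<in> A \<and> a' \<in> A \<and> a' \<otimes> inv a \<in> P}"
  have finT: "finite T" unfolding T_def using finP finA by auto
  have fT: "f ` T \<subseteq> PA"
  proof
    fix w assume "w \<in> f ` T"
    then obtain p a where "p \<in> P" "a \<in> A" "w = p \<otimes> a" unfolding T_def f_def by auto
    thus "w \<in> PA" unfolding PA_mem by blast
  qed
  have g1: "real (card T)^2 \<le> real (card (f ` T)) * real (card Q)" unfolding Q_def by (rule gcs[OF finT])
  have cQ: "card Q \<le> card (Z \<times> P)"
  proof (rule card_inj_on_le[where f="\<lambda>((p,a),(p',a')). ((a,a'),p)"])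
    show "finite (Z \<times> P)" unfolding Z_def using finP finA by (auto intro: finite_subset[of _ "A \<times> A"])
    show "inj_on (\<lambda>((p,a),(p',a')). ((a,a'),p)) Q"
    proof (rule inj_onI)
      fix u v assume u: "u \<in> Q" and v: "v \<in> Q" and e: "(\<lambda>((p,a),(p',a')). ((a,a'),p)) u = (\<lambda>((p,a),(p',a')). ((a,a'),p)) v"
      obtain a p a' p' where uu: "u = ((p,a),(p',a'))" "a \<in> A" "p \<in> P" "a' \<in> A" "p' \<in> P" "p \<otimes> a = p' \<otimes> a'"
        using u unfolding Q_def T_def f_def by auto
      obtain b r b' r' where vv: "v = ((r,b),(r',b'))" "b \<in> A" "r \<in> P" "b' \<in> A" "r' \<in> P" "r \<otimes> b = r' \<otimes> b'"
        using v unfolding Q_def T_def f_def by auto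
      have eq: "a = b" "p = r" "a' = b'" using e uu(1) vv(1) by auto
      have "p' = (p \<otimes> a) \<otimes> inv a'" using solve_r[OF uu(6)[symmetric]] uu Pc Ace by simp
      moreover have "r' = (r \<otimes> b) \<otimes> inv b'" using solve_r[OF vv(6)[symmetric]] vv Pc Ace by simp
      ultimately have "p' = r'" using eq by simp
      thus "u = v" using uu(1) vv(1) eq by simp
    qed
    show "(\<lambda>((p,a),(p',a')). ((a,a'),p)) ` Q \<subseteq> Z \<times> P"
    proof
      fix w assume "w \<in> (\<lambda>((p,a),(p',a')). ((a,a'),p)) ` Q"
      then obtain a p a' p' where uu: "w = ((a,a'),p)" "a \<in> A" "p \<in> P" "a' \<in> A" "p' \<in> P" "p \<otimes> a = p' \<otimes> a'"
        unfolding Q_def T_def f_def by auto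
      have "a' \<otimes> inv a = inv p' \<otimes> p" by (rule sw1[OF uu(6)[symmetric]]) (use uu Pc Ace in auto)
      also have "\<dots> \<in> P" by (rule Pm[OF Pi[OF uu(5)] uu(3)])
      finally show "w \<in> Z \<times> P" unfolding Z_def using uu by simp
    qed
  qed
  have "real (card P * card A)^2 \<le> real (card PA) * real (card Q)"
  proof -
    have "real (card (f ` T)) \<le> real (card PA)" using card_mono[OF finPA fT] by simp
    hence "real (card (f ` T)) * real (card Q) \<le> real (card PA) * real (card Q)" by (rule mult_right_mono) simp
    thus ?thesis using g1 unfolding T_def by (simp add: card_cartesian_product)
  qed
  also have "\<dots> \<le> real (card PA) * (real (sigma_count G P A (set_inv A)) * real (card P))"
  proof -
    have "card Q \<le> card Z * card P" using cQ by (simp add: card_cartesian_product)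
    hence "real (card Q) \<le> real (card Z) * real (card P)" by (metis of_nat_le_iff of_nat_mult)
    also have "\<dots> \<le> real (sigma_count G P A (set_inv A)) * real (card P)"
      by (rule mult_right_mono[OF sig2_bound[folded Z_def]]) simp
    finally show ?thesis by (rule mult_left_mono) simp
  qed
  finally have "real (card A)^2 * real (card P) * real (card P) \<le> (real (card PA) * real (sigma_count G P A (set_inv A))) * real (card P)"
    by (simp add: power2_eq_square ac_simps)
  thus ?thesis using cardP by simp
qed

end

context bnPA begin

lemma YY:
  assumes g: "g \<in> carrier G" and gP: "g \<notin> P"
  shows "real q * real (card P) * real (card {v\<in>PA. g \<otimes> v \<in> PA}) \<le> real (card PA)^2"
proof -
  define W where "W = {v\<in>PA. g \<otimes> v \<in> PA}"
  define K where "K = {k\<in>P. inv (inv g) \<otimes> k \<otimes> inv g \<in> P}"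
  have igP: "inv g \<notin> P"
  proof
    assume "inv g \<in> P"
    hence "inv (inv g) \<in> P" by (rule Pi)
    thus False using gP g by (simp add: inv_inv)
  qed
  have qK: "q * card K \<le> card P" unfolding K_def by (rule K1[OF inv_closed[OF g] igP])
  have PAc': "v \<in> PA \<Longrightarrow> v \<in> carrier G" for v using PAc by auto
  define f where "f = (\<lambda>(v,(p,p')). (p \<otimes> v, p' \<otimes> g \<otimes> v))"
  have h: "real (card (W \<times> (P \<times> P))) \<le> real (card (PA \<times> PA)) * (real (card P) / real q)"
  proof (rule fiber_upper[where f=f])
    show "finite (PA \<times> PA)" using finPA by auto
    fix t assume "t \<in> W \<times> (P \<times> P)"
    then obtain v p p' where t: "t = (v,(p,p'))" "v \<in> PA" "g \<otimes> v \<in> PA" "p \<in> P" "p' \<in> P" unfolding W_def by auto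
    have "p' \<otimes> g \<otimes> v = p' \<otimes> (g \<otimes> v)" using t Pc g PAc' by (simp add: m_assoc)
    thus "f t \<in> PA \<times> PA" unfolding f_def t(1) using PA_linv t by simp
  next
    fix u assume u: "u \<in> PA \<times> PA"
    define F where "F = {t \<in> W \<times> (P \<times> P). f t = u}"
    have "real (card F) \<le> real (card P) / real q"
    proof (cases "F = {}")
      case True thus ?thesis by simp
    next
      case False
      then obtain v0 p0 p0' where t0: "v0 \<in> W" "p0 \<in> P" "p0' \<in> P" "f (v0,(p0,p0')) = u" unfolding F_def by auto
      have c0: "v0 \<in> carrier G" "p0 \<in> carrier G" "p0' \<in> carrier G" using t0 Pc PAc' unfolding W_def by auto
      have "card F \<le> card K"
      proof (rule card_inj_on_le[where f="\<lambda>(v,(p,p')). v \<otimes> inv v0"])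
        show "finite K" unfolding K_def using finP by auto
        show "inj_on (\<lambda>(v,(p,p')). v \<otimes> inv v0) F"
        proof (rule inj_onI)
          fix t1 t2 assume t1: "t1 \<in> F" and t2: "t2 \<in> F" and e: "(\<lambda>(v,(p,p')). v \<otimes> inv v0) t1 = (\<lambda>(v,(p,p')). v \<otimes> inv v0) t2"
          obtain v1 p1 p1' where 1: "t1 = (v1,(p1,p1'))" "v1 \<in> W" "p1 \<in> P" "p1' \<in> P" "f t1 = u" using t1 unfolding F_def by auto
          obtain v2 p2 p2' where 2: "t2 = (v2,(p2,p2'))" "v2 \<in> W" "p2 \<in> P" "p2' \<in> P" "f t2 = u" using t2 unfolding F_def by auto
          have c12: "v1 \<in> carrier G" "v2 \<in> carrier G" "p1 \<in> carrier G" "p2 \<in> carrier G" "p1' \<in> carrier G" "p2' \<in> carrier G"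
            using 1 2 Pc PAc' unfolding W_def by auto
          have "v1 \<otimes> inv v0 = v2 \<otimes> inv v0" using e 1(1) 2(1) by simp
          hence vv: "v1 = v2" using c12 c0 by simp
          have f12: "p1 \<otimes> v1 = p2 \<otimes> v2" "p1' \<otimes> g \<otimes> v1 = p2' \<otimes> g \<otimes> v2"
            using 1(1,5) 2(1,5) unfolding f_def by auto
          have "p1 = p2" using f12(1) vv c12 by simp
          moreover have "p1' \<otimes> g = p2' \<otimes> g" using f12(2) vv c12 g by simp
          hence "p1' = p2'" using c12 g by simp
          ultimately show "t1 = t2" using 1(1) 2(1) vv by simp
        qed
        show "(\<lambda>(v,(p,p')). v \<otimes> inv v0) ` F \<subseteq> K"
        proof
          fix w assume "w \<in> (\<lambda>(v,(p,p')). v \<otimes> inv v0) ` F"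
          then obtain v p p' where tt: "v \<in> W" "p \<in> P" "p' \<in> P" "f (v,(p,p')) = u" "w = v \<otimes> inv v0"
            unfolding F_def by auto
          have c: "v \<in> carrier G" "p \<in> carrier G" "p' \<in> carrier G" using tt Pc PAc' unfolding W_def by auto
          have ff: "p \<otimes> v = p0 \<otimes> v0" "(p' \<otimes> g) \<otimes> v = (p0' \<otimes> g) \<otimes> v0"
            using tt(4) t0(4) unfolding f_def by auto
          have w1: "w = inv p \<otimes> p0" unfolding tt(5) by (rule sw1[OF ff(1)]) (use c c0 in auto)
          have w2: "w = inv (p' \<otimes> g) \<otimes> (p0' \<otimes> g)" unfolding tt(5) by (rule sw1[OF ff(2)]) (use c c0 g in auto)
          have wP: "w \<in> P" unfolding w1 by (rule Pm[OF Pi[OF tt(2)] t0(2)])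
          have "inv (inv g) \<otimes> w \<otimes> inv g = inv p' \<otimes> p0'" unfolding w2 using c c0 g
            by (simp add: inv_inv inv_mult_group m_assoc)
          also have "\<dots> \<in> P" by (rule Pm[OF Pi[OF tt(3)] t0(3)])
          finally show "w \<in> K" unfolding K_def using wP by simp
        qed
      qed
      hence "real q * real (card F) \<le> real (card P)" using qK
        by (metis (no_types, lifting) le_trans mult_le_mono2 of_nat_le_iff of_nat_mult)
      thus ?thesis using q1 by (simp add: field_simps)
    qed
    thus "real (card {t \<in> W \<times> (P \<times> P). f t = u}) \<le> real (card P) / real q" unfolding F_def .
  qed
  have qpos: "real q > 0" using q1 by simp
  have "real (card W) * real (card P) * real (card P) \<le> real (card PA) * real (card PA) * (real (card P) / real q)"
    using h by (simp add: card_cartesian_product ac_simps)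
  hence "real (card W) * real (card P) * real (card P) * real q \<le> real (card PA) * real (card PA) * real (card P)"
    using qpos by (simp add: field_simps)
  hence "real (card P) * (real q * real (card P) * real (card W)) \<le> real (card P) * (real (card PA))^2"
    by (simp add: ac_simps power2_eq_square)
  hence "real q * real (card P) * real (card W) \<le> (real (card PA))^2" using cardP by (simp add: mult_le_cancel_left_pos)
  thus ?thesis unfolding W_def .
qed

definition APA where "APA = (A <#> P) <#> A"

lemma finAPA: "finite APA"
proof -
  have "APA \<subseteq> carrier G"
  proof
    fix w assume "w \<in> APA"
    then obtain x a where "x \<in> AP" "a \<in> A" "w = x \<otimes> a" unfolding APA_def smem AP_def[symmetric] by blast
    thus "w \<in> carrier G" using APc Ace by auto
  qed
  thus ?thesis using fin finite_subset by blast
qed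

lemma energy:
  "real (card AP)^2 * real (card PA)^2 \<le> real (card APA) *
     (real (card AP) * real (card P) * real (card PA) + real (card AP)^2 * real (card PA)^2 / (real q * real (card P)))"
proof -
  have APc': "x \<in> AP \<Longrightarrow> x \<in> carrier G" for x using APc by auto
  have PAc': "x \<in> PA \<Longrightarrow> x \<in> carrier G" for x using PAc by auto
  define T where "T = AP \<times> PA"
  define f where "f = (\<lambda>(x,y). x \<otimes> y)"
  define Q where "Q = {(t,t'). t \<in> T \<and> t' \<in> T \<and> f t = f t'}"
  define Q1 where "Q1 = {u \<in> Q. inv (fst (fst u)) \<otimes> fst (snd u) \<in> P}"
  define Q2 where "Q2 = {u \<in> Q. inv (fst (fst u)) \<otimes> fst (snd u) \<notin> P}"
  have finT: "finite T" unfolding T_def using finAP finPA by auto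
  have fT: "f ` T \<subseteq> APA"
  proof
    fix w assume "w \<in> f ` T"
    then obtain x y where xy: "x \<in> AP" "y \<in> PA" "w = x \<otimes> y" unfolding T_def f_def by auto
    obtain a p where ap: "a \<in> A" "p \<in> P" "x = a \<otimes> p" using xy(1) AP_mem by blast
    obtain a' p' where ap': "a' \<in> A" "p' \<in> P" "y = p' \<otimes> a'" using xy(2) PA_mem by blast
    have weq: "w = (a \<otimes> (p \<otimes> p')) \<otimes> a'" unfolding xy(3) ap(3) ap'(3) using ap ap' Ace Pc by (simp add: m_assoc)
    have m: "a \<otimes> (p \<otimes> p') \<in> A <#> P" by (rule iffD2[OF smem]) (use ap ap' Pm in blast)
    show "w \<in> APA" unfolding APA_def by (rule iffD2[OF smem]) (use m ap'(1) weq in blast)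
  qed
  have g1: "real (card T)^2 \<le> real (card (f ` T)) * real (card Q)" unfolding Q_def by (rule gcs[OF finT])
  have finQ: "finite Q" unfolding Q_def using finT by (auto intro: finite_subset[of _ "T \<times> T"])
  have QU: "Q = Q1 \<union> Q2" unfolding Q1_def Q2_def by auto
  have cQ1: "card Q1 \<le> card (AP \<times> (P \<times> PA))"
  proof (rule card_inj_on_le[where f="\<lambda>((x,y),(x',y')). (x, (inv x \<otimes> x', y))"])
    show "finite (AP \<times> (P \<times> PA))" using finAP finP finPA by auto
    show "inj_on (\<lambda>((x,y),(x',y')). (x, (inv x \<otimes> x', y))) Q1"
    proof (rule inj_onI)
      fix u v assume u: "u \<in> Q1" and v: "v \<in> Q1" and e: "(\<lambda>((x,y),(x',y')). (x, (inv x \<otimes> x', y))) u = (\<lambda>((x,y),(x',y')). (x, (inv x \<otimes> x', y))) v"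
      obtain x y x' y' where uu: "u = ((x,y),(x',y'))" "x \<in> AP" "y \<in> PA" "x' \<in> AP" "y' \<in> PA" "x \<otimes> y = x' \<otimes> y'"
        using u unfolding Q1_def Q_def T_def f_def by auto
      obtain r z r' z' where vv: "v = ((r,z),(r',z'))" "r \<in> AP" "z \<in> PA" "r' \<in> AP" "z' \<in> PA" "r \<otimes> z = r' \<otimes> z'"
        using v unfolding Q1_def Q_def T_def f_def by auto
      have e1: "x = r" "inv x \<otimes> x' = inv r \<otimes> r'" "y = z" using e uu(1) vv(1) by auto
      have "x' = x \<otimes> (inv x \<otimes> x')" using uu APc' by simp
      moreover have "r' = r \<otimes> (inv r \<otimes> r')" using vv APc' by simp
      ultimately have xx: "x' = r'" using e1 by simp
      have "y' = inv x' \<otimes> (x \<otimes> y)" using solve_l[OF uu(6)[symmetric]] uu APc' PAc' by simp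
      moreover have "z' = inv r' \<otimes> (r \<otimes> z)" using solve_l[OF vv(6)[symmetric]] vv APc' PAc' by simp
      ultimately have "y' = z'" using e1 xx by simp
      thus "u = v" using uu(1) vv(1) e1 xx by simp
    qed
    show "(\<lambda>((x,y),(x',y')). (x, (inv x \<otimes> x', y))) ` Q1 \<subseteq> AP \<times> (P \<times> PA)"
      unfolding Q1_def Q_def T_def by auto
  qed
  have cQ2: "real (card Q2) \<le> real (card (AP \<times> AP)) * (real (card PA)^2 / (real q * real (card P)))"
  proof (rule fiber_upper[where f="\<lambda>((x,y),(x',y')). (x,x')"])
    show "finite (AP \<times> AP)" using finAP by auto
    fix t assume "t \<in> Q2" thus "(\<lambda>((x,y),(x',y')). (x,x')) t \<in> AP \<times> AP" unfolding Q2_def Q_def T_def by auto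
  next
    fix w assume w: "w \<in> AP \<times> AP"
    then obtain x x' where ww: "w = (x,x')" "x \<in> AP" "x' \<in> AP" by auto
    define F where "F = {t \<in> Q2. (\<lambda>((x,y),(x',y')). (x,x')) t = w}"
    have "real (card F) \<le> real (card PA)^2 / (real q * real (card P))"
    proof (cases "inv x \<otimes> x' \<in> P")
      case True
      hence "F = {}" unfolding F_def Q2_def ww(1) by auto
      thus ?thesis by simp
    next
      case False
      define g where "g = inv x \<otimes> x'"
      have gc: "g \<in> carrier G" unfolding g_def using ww APc' by auto
      have "card F \<le> card {v\<in>PA. g \<otimes> v \<in> PA}"
      proof (rule card_inj_on_le[where f="\<lambda>((x,y),(x',y')). y'"])
        show "finite {v\<in>PA. g \<otimes> v \<in> PA}" using finPA by auto
        show "inj_on (\<lambda>((x,y),(x',y')). y') F"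
        proof (rule inj_onI)
          fix u v assume u: "u \<in> F" and v: "v \<in> F" and e: "(\<lambda>((x,y),(x',y')). y') u = (\<lambda>((x,y),(x',y')). y') v"
          obtain y y' where uu: "u = ((x,y),(x',y'))" "y \<in> PA" "y' \<in> PA" "x \<otimes> y = x' \<otimes> y'"
            using u ww unfolding F_def Q2_def Q_def T_def f_def by auto
          obtain z z' where vv: "v = ((x,z),(x',z'))" "z \<in> PA" "z' \<in> PA" "x \<otimes> z = x' \<otimes> z'"
            using v ww unfolding F_def Q2_def Q_def T_def f_def by auto
          have yz: "y' = z'" using e uu(1) vv(1) by simp
          have "y = inv x \<otimes> (x' \<otimes> y')" using solve_l[OF uu(4)] uu ww APc' PAc' by simp
          moreover have "z = inv x \<otimes> (x' \<otimes> z')" using solve_l[OF vv(4)] vv ww APc' PAc' by simp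
          ultimately have "y = z" using yz by simp
          thus "u = v" using uu(1) vv(1) yz by simp
        qed
        show "(\<lambda>((x,y),(x',y')). y') ` F \<subseteq> {v\<in>PA. g \<otimes> v \<in> PA}"
        proof
          fix v assume "v \<in> (\<lambda>((x,y),(x',y')). y') ` F"
          then obtain y y' where uu: "v = y'" "y \<in> PA" "y' \<in> PA" "x \<otimes> y = x' \<otimes> y'"
            using ww unfolding F_def Q2_def Q_def T_def f_def by auto
          have "y = inv x \<otimes> (x' \<otimes> y')" using solve_l[OF uu(4)] uu ww APc' PAc' by simp
          also have "\<dots> = g \<otimes> y'" unfolding g_def using uu ww APc' PAc' by (simp add: m_assoc)
          finally show "v \<in> {v\<in>PA. g \<otimes> v \<in> PA}" using uu by simp
        qed
      qed
      moreover have "real q * real (card P) * real (card {v\<in>PA. g \<otimes> v \<in> PA}) \<le> real (card PA)^2"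
        by (rule YY[OF gc]) (use False g_def in simp)
      ultimately have "real q * real (card P) * real (card F) \<le> real (card PA)^2"
        by (smt (verit, best) mult_left_mono of_nat_0_le_iff of_nat_le_iff zero_le_mult_iff)
      moreover have "real q * real (card P) > 0" using q1 cardP by simp
      ultimately show ?thesis by (simp add: field_simps)
    qed
    thus "real (card {t \<in> Q2. (\<lambda>((x,y),(x',y')). (x,x')) t = w}) \<le> real (card PA)^2 / (real q * real (card P))"
      unfolding F_def .
  qed
  have "card Q \<le> card Q1 + card Q2" unfolding QU by (rule card_Un_le)
  hence r0: "real (card Q) \<le> real (card Q1) + real (card Q2)" by (metis of_nat_add of_nat_le_iff)
  have "card Q1 \<le> card AP * card P * card PA" using cQ1 by (simp add: card_cartesian_product mult.assoc)
  hence r1: "real (card Q1) \<le> real (card AP) * real (card P) * real (card PA)" by (metis of_nat_le_iff of_nat_mult)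
  have e2: "real (card (AP \<times> AP)) * (real (card PA)^2 / (real q * real (card P))) = real (card AP)^2 * real (card PA)^2 / (real q * real (card P))"
    by (simp add: card_cartesian_product power2_eq_square)
  have r2: "real (card Q2) \<le> real (card AP)^2 * real (card PA)^2 / (real q * real (card P))" using cQ2 unfolding e2 .
  have "real (card Q) \<le> real (card AP) * real (card P) * real (card PA) + real (card AP)^2 * real (card PA)^2 / (real q * real (card P))"
    using r0 r1 r2 by linarith
  moreover have "real (card (f ` T)) \<le> real (card APA)" using card_mono[OF finAPA fT] by simp
  ultimately have "real (card (f ` T)) * real (card Q) \<le> real (card APA) * (real (card AP) * real (card P) * real (card PA) + real (card AP)^2 * real (card PA)^2 / (real q * real (card P)))"
    by (intro mult_mono) auto
  with g1 show ?thesis unfolding T_def by (simp add: card_cartesian_product power_mult_distrib)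
qed

end

lemma claim3_arith:
  fixes x y n M s1 s2 a q :: real
  assumes x: "x > 0" and y: "y > 0" and n: "n > 0" and q: "q > 0" and M: "M \<ge> 0" and a: "a > 0"
    and X: "a^2 * n \<le> x * s1" and Y: "a^2 * n \<le> y * s2"
    and E: "x^2 * y^2 \<le> M * (x * n * y + x^2 * y^2 / (q * n))"
  shows "M \<ge> n / 4 * min q (a^4 / (s1 * s2))"
proof -
  have s1: "s1 > 0" using X x a n by (smt (verit) mult_pos_pos zero_less_power zero_less_mult_pos)
  have s2: "s2 > 0" using Y y a n by (smt (verit) mult_pos_pos zero_less_power zero_less_mult_pos)
  show ?thesis
  proof (cases "x^2 * y^2 / (q * n) \<le> x * n * y")
    case True
    have "x^2 * y^2 \<le> M * (2 * (x * n * y))"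
      using E True M by (smt (verit) mult_left_mono)
    hence "(x * y) * (x * y) \<le> (x * y) * (2 * M * n)" by (simp add: power2_eq_square ac_simps)
    hence xy: "x * y \<le> 2 * M * n" using x y by (simp add: mult_le_cancel_left_pos)
    have "(a^2 * n) * (a^2 * n) \<le> (x * s1) * (y * s2)"
      by (rule mult_mono[OF X Y]) (use a n x s1 in auto)
    hence "a^4 * n * n \<le> (x * y) * (s1 * s2)" by (simp add: power2_eq_square power4_eq_xxxx ac_simps)
    also have "\<dots> \<le> (2 * M * n) * (s1 * s2)" by (rule mult_right_mono[OF xy]) (use s1 s2 in auto)
    finally have "a^4 * n * n \<le> 2 * M * n * (s1 * s2)" .
    hence "n * (a^4 * n) \<le> n * (2 * M * (s1 * s2))" by (simp add: ac_simps)
    hence "a^4 * n \<le> 2 * M * (s1 * s2)" using n by (simp add: mult_le_cancel_left_pos)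
    hence r: "n * (a^4 / (s1 * s2)) \<le> 2 * M" using s1 s2 by (simp add: field_simps)
    have "n / 4 * min q (a^4 / (s1 * s2)) \<le> n / 4 * (a^4 / (s1 * s2))"
      by (rule mult_left_mono) (use n in auto)
    also have "\<dots> = (n * (a^4 / (s1 * s2))) / 4" by simp
    also have "\<dots> \<le> M"
    proof -
      have "\<And>t::real. t \<le> 2 * M \<Longrightarrow> t / 4 \<le> M" using M by linarith
      thus ?thesis using r by blast
    qed
    finally show ?thesis .
  next
    case False
    have "x^2 * y^2 \<le> M * (2 * (x^2 * y^2 / (q * n)))"
      using E False M by (smt (verit) mult_left_mono)
    hence "(x^2 * y^2) * 1 \<le> (x^2 * y^2) * (2 * M / (q * n))" by (simp add: ac_simps)
    moreover have k: "x^2 * y^2 > 0" using x y by simp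
    ultimately have "1 \<le> 2 * M / (q * n)" by (metis k mult_le_cancel_left_pos)
    hence r: "q * n \<le> 2 * M" using q n by (simp add: field_simps)
    have "n / 4 * min q (a^4 / (s1 * s2)) \<le> n / 4 * q"
      by (rule mult_left_mono) (use n in auto)
    also have "\<dots> \<le> M"
    proof -
      have "\<And>t::real. t \<le> 2 * M \<Longrightarrow> t / 4 \<le> M" using M by linarith
      from this[OF r] show ?thesis by (simp add: ac_simps)
    qed
    finally show ?thesis .
  qed
qed

context bnPA begin

lemma claim3:
  "real (card ((A <#> P) <#> A)) \<ge>
       real (card P) / 4 * min (real q)
         (real (card A) ^ 4 /
           (real (sigma_count G P (set_inv A) A) * real (sigma_count G P A (set_inv A))))"
proof -
  have "real (card APA) \<ge> real (card P) / 4 * min (real q)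
         (real (card A) ^ 4 / (real (sigma_count G P (set_inv A) A) * real (sigma_count G P A (set_inv A))))"
  proof (rule claim3_arith[OF _ _ _ _ _ _ X_bound Y_bound energy])
    show "real (card AP) > 0" using cardAP cardA by simp
    show "real (card PA) > 0" using cardPA cardA by simp
    show "real (card P) > 0" using cardP by simp
    show "real q > 0" using q1 by simp
    show "real (card APA) \<ge> 0" by simp
    show "real (card A) > 0" using cardA by simp
  qed
  thus ?thesis unfolding APA_def .
qed

lemma claim4:
  assumes "\<not> A \<subseteq> P"
  shows "real q * real (card P) \<le> real (card ((P <#> A) <#> Bo))"
proof -
  obtain g where g: "g \<in> A" "g \<notin> P" using assms by auto
  have gc: "g \<in> carrier G" using g Ace by auto
  have sub: "{p \<otimes> g \<otimes> b | p b. p \<in> P \<and> b \<in> Bo} \<subseteq> (P <#> A) <#> Bo"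
  proof
    fix w assume "w \<in> {p \<otimes> g \<otimes> b | p b. p \<in> P \<and> b \<in> Bo}"
    then obtain p b where pb: "p \<in> P" "b \<in> Bo" "w = p \<otimes> g \<otimes> b" by blast
    have pg: "p \<otimes> g \<in> P <#> A" by (rule iffD2[OF smem]) (use pb g in blast)
    show "w \<in> (P <#> A) <#> Bo" by (rule iffD2[OF smem]) (use pb pg in blast)
  qed
  have fin2: "finite ((P <#> A) <#> Bo)"
  proof -
    have "(P <#> A) <#> Bo \<subseteq> carrier G"
    proof
      fix w assume "w \<in> (P <#> A) <#> Bo"
      then obtain y b where "y \<in> P <#> A" "b \<in> Bo" "w = y \<otimes> b" using smem by blast
      thus "w \<in> carrier G" using PAc Boc unfolding PA_def by auto
    qed
    thus ?thesis using fin finite_subset by blast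
  qed
  have "q * card P \<le> card {p \<otimes> g \<otimes> b | p b. p \<in> P \<and> b \<in> Bo}" by (rule claim4_core[OF gc g(2)])
  also have "\<dots> \<le> card ((P <#> A) <#> Bo)" by (rule card_mono[OF fin2 sub])
  finally show ?thesis by (metis of_nat_le_iff of_nat_mult)
qed

end

lemma conj_eq:
  assumes "group G" "c \<in> carrier G"
  shows "conj_set G c B = {c \<otimes>\<^bsub>G\<^esub> b \<otimes>\<^bsub>G\<^esub> inv\<^bsub>G\<^esub> c | b. b \<in> B}"
  unfolding conj_set_def l_coset_def r_coset_def by auto

theorem theorem12:
  fixes G :: "('a, 'b) monoid_scheme" and B N S P A :: "'a set" and q :: nat
  assumes "finite_BN_group_over G B N S q"
    and "parabolic_subgroup G B P" and "P \<noteq> carrier G"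
    and "A \<subseteq> carrier G" and "A \<noteq> {}"
  shows
    "(real (card (A <#>\<^bsub>G\<^esub> P)) * real (card (A \<inter> P)) \<ge> real (card A) ^ 2 / 2
      \<or> real (card (A <#>\<^bsub>G\<^esub> P)) * real (card (P <#>\<^bsub>G\<^esub> A))
          \<ge> real (card A) * real (card P) * real q / 4)
   \<and> real (max (card (A <#>\<^bsub>G\<^esub> P)) (card (P <#>\<^bsub>G\<^esub> A))) \<ge>
       (if A \<inter> P = {} then sqrt (real (card A) * real (card P) * real q) / 2
        else min (real (card A) ^ 2 / real (card (A \<inter> P)))
                 (sqrt (real (card A) * real (card P) * real q)) / 2)
   \<and> real (card ((A <#>\<^bsub>G\<^esub> P) <#>\<^bsub>G\<^esub> A)) \<ge>
       real (card P) / 4 * min (real q)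
         (real (card A) ^ 4 /
           (real (sigma_count G P (set_inv\<^bsub>G\<^esub> A) A) * real (sigma_count G P A (set_inv\<^bsub>G\<^esub> A))))
   \<and> (\<forall>Bo. borel_subgroup G B Bo \<and> Bo \<subseteq> P \<and> \<not> A \<subseteq> P \<longrightarrow>
         real (card ((P <#>\<^bsub>G\<^esub> A) <#>\<^bsub>G\<^esub> Bo)) \<ge> real q * real (card P))"
proof -
  have tits: "tits_system G B N S" and fin: "finite (carrier G)"
    and qp: "\<exists>p k. Factorial_Ring.prime (p::nat) \<and> k > 0 \<and> q = p ^ k"
    and hyp: "\<forall>s\<in>S. q * card B \<le> card ((B <#>\<^bsub>G\<^esub> {s}) <#>\<^bsub>G\<^esub> B)"
    using assms(1) unfolding finite_BN_group_over_def by auto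
  have bnG: "bn G B N S" using tits unfolding tits_system_def bn_def bn_axioms_def by auto
  interpret bn G B N S by (rule bnG)
  have q1: "q \<ge> 1"
  proof -
    from qp obtain p k where pk: "Factorial_Ring.prime (p::nat)" "q = p ^ k" by auto
    have "p > 0" using pk(1) by (simp add: prime_gt_0_nat)
    thus ?thesis using pk(2) by simp
  qed
  from assms(2) obtain Bo0 where P: "subgroup P G" and Bo0: "borel_subgroup G B Bo0" "Bo0 \<subseteq> P"
    unfolding parabolic_subgroup_def by auto
  from Bo0 obtain c where c: "c \<in> carrier G" "Bo0 = conj_set G c B" unfolding borel_subgroup_def by auto
  have BoP: "{c \<otimes>\<^bsub>G\<^esub> b \<otimes>\<^bsub>G\<^esub> inv\<^bsub>G\<^esub> c | b. b \<in> B} \<subseteq> P" using Bo0(2) c conj_eq[OF is_group c(1), of B] by simp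
  have XX: "bnPA G B N S q P c A" unfolding bnPA_def bnPA_axioms_def bnP_def bnP_axioms_def
    by (intro conjI bnG fin hyp P c BoP q1 assms(4) assms(5))
  interpret X: bnPA G B N S q P c A by (rule XX)
  have part1: "(real (card (A <#>\<^bsub>G\<^esub> P)) * real (card (A \<inter> P)) \<ge> real (card A) ^ 2 / 2
      \<or> real (card (A <#>\<^bsub>G\<^esub> P)) * real (card (P <#>\<^bsub>G\<^esub> A)) \<ge> real (card A) * real (card P) * real q / 4)"
    using X.claim1 unfolding X.AP_def X.PA_def .
  have part2: "real (max (card (A <#>\<^bsub>G\<^esub> P)) (card (P <#>\<^bsub>G\<^esub> A))) \<ge>
       (if A \<inter> P = {} then sqrt (real (card A) * real (card P) * real q) / 2
        else min (real (card A) ^ 2 / real (card (A \<inter> P)))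
                 (sqrt (real (card A) * real (card P) * real q)) / 2)"
    using X.claim2 unfolding X.AP_def X.PA_def .
  have part3: "real (card ((A <#>\<^bsub>G\<^esub> P) <#>\<^bsub>G\<^esub> A)) \<ge>
       real (card P) / 4 * min (real q)
         (real (card A) ^ 4 /
           (real (sigma_count G P (set_inv\<^bsub>G\<^esub> A) A) * real (sigma_count G P A (set_inv\<^bsub>G\<^esub> A))))"
    by (rule X.claim3)
  have part4: "\<forall>Bo. borel_subgroup G B Bo \<and> Bo \<subseteq> P \<and> \<not> A \<subseteq> P \<longrightarrow>
         real (card ((P <#>\<^bsub>G\<^esub> A) <#>\<^bsub>G\<^esub> Bo)) \<ge> real q * real (card P)"
  proof (intro allI impI)
    fix Bo assume h: "borel_subgroup G B Bo \<and> Bo \<subseteq> P \<and> \<not> A \<subseteq> P"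
    then obtain c' where c': "c' \<in> carrier G" "Bo = conj_set G c' B" unfolding borel_subgroup_def by auto
    have Boe: "Bo = {c' \<otimes>\<^bsub>G\<^esub> b \<otimes>\<^bsub>G\<^esub> inv\<^bsub>G\<^esub> c' | b. b \<in> B}" using c' conj_eq[OF is_group c'(1), of B] by simp
    have BoP': "{c' \<otimes>\<^bsub>G\<^esub> b \<otimes>\<^bsub>G\<^esub> inv\<^bsub>G\<^esub> c' | b. b \<in> B} \<subseteq> P" using h Boe by simp
    have YY: "bnPA G B N S q P c' A" unfolding bnPA_def bnPA_axioms_def bnP_def bnP_axioms_def
      by (intro conjI bnG fin hyp P c'(1) BoP' q1 assms(4) assms(5))
    interpret Y: bnPA G B N S q P c' A by (rule YY)
    have "real q * real (card P) \<le> real (card ((P <#>\<^bsub>G\<^esub> A) <#>\<^bsub>G\<^esub> Y.Bo))" using Y.claim4 h by simp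
    thus "real (card ((P <#>\<^bsub>G\<^esub> A) <#>\<^bsub>G\<^esub> Bo)) \<ge> real q * real (card P)" unfolding Y.Bo_def Boe .
  qed
  show ?thesis using part1 part2 part3 part4 by blast
qed


end
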